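(* Let $p\in[1,\infty]$ and let $H:\ell^p(\mathbb{Z})\to\ell^p(\mathbb{Z})$ be given by $(Hx)_n=x_{n+1}+x_{n-1}+v(n)x_n$ with $v:\mathbb{Z}\to\mathbb{Z}$ $K$-periodic, $K\in\mathbb{N}$. Then the following are equivalent: (i) $H$ is invertible; (ii) $H_+$ is invertible; (iii) $H_-$ is invertible; (iv) $|\operatorname{tr}(M(0))|>2$.
   Context: Monodromy matrix $M(E)=T(K-1,E)\cdots T(0,E)$ with $T(n,E)=\begin{pmatrix}E-v(n)&-1\\1&0\end{pmatrix}$. With $H=(a_{ij})$ its matrix, $H_+=(a_{ij})_{i,j=0}^\infty$ on $\ell^p(\mathbb{Z}_+)$ and $H_-=(a_{ij})_{i,j=-\infty}^0$ on $\ell^p(\mathbb{Z}_-)$, where $\mathbb{Z}_+=\{0,1,\dots\}$, $\mathbb{Z}_-=\{0,-1,\dots\}$. *)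

theory Defs
  imports "HOL-Analysis.Analysis"
begin

definition transfer :: "(int \<Rightarrow> int) \<Rightarrow> int \<Rightarrow> real \<Rightarrow> real^2^2" where
  "transfer v n E = vector [vector [E - real_of_int (v n), -1], vector [1, 0]]"

fun monodromy_aux :: "(int \<Rightarrow> int) \<Rightarrow> nat \<Rightarrow> real \<Rightarrow> real^2^2" where
  "monodromy_aux v 0 E = mat 1"
| "monodromy_aux v (Suc k) E = transfer v (int k) E ** monodromy_aux v k E"

definition monodromy :: "(int \<Rightarrow> int) \<Rightarrow> nat \<Rightarrow> real \<Rightarrow> real^2^2" where
  "monodromy v K E = monodromy_aux v K E"

text \<open>lp(S) for S a subset of Z, realised as complex sequences on Z vanishing outside S;
  p ranges over [1, \<infinity>] as an extended real.\<close>

definition lp_space :: "ereal \<Rightarrow> int set \<Rightarrow> (int \<Rightarrow> complex) set" where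
  "lp_space p S = {x. (\<forall>n. n \<notin> S \<longrightarrow> x n = 0) \<and>
     (if p = \<infinity> then bounded (range x)
      else (\<lambda>n. cmod (x n) powr real_of_ereal p) summable_on UNIV)}"

definition lp_norm :: "ereal \<Rightarrow> (int \<Rightarrow> complex) \<Rightarrow> real" where
  "lp_norm p x = (if p = \<infinity> then (SUP n. cmod (x n))
     else (\<Sum>\<^sub>\<infinity>n. cmod (x n) powr real_of_ereal p) powr (1 / real_of_ereal p))"

definition lp_invertible :: "ereal \<Rightarrow> int set \<Rightarrow> ((int \<Rightarrow> complex) \<Rightarrow> (int \<Rightarrow> complex)) \<Rightarrow> bool" where
  "lp_invertible p S A \<longleftrightarrow>
     (\<exists>B. (\<forall>x\<in>lp_space p S. B x \<in> lp_space p S) \<and>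
          (\<forall>x\<in>lp_space p S. B (A x) = x) \<and>
          (\<forall>x\<in>lp_space p S. A (B x) = x) \<and>
          (\<forall>x\<in>lp_space p S. \<forall>y\<in>lp_space p S. \<forall>a b. B (\<lambda>n. a * x n + b * y n) = (\<lambda>n. a * B x n + b * B y n)) \<and>
          (\<exists>C. \<forall>x\<in>lp_space p S. lp_norm p (B x) \<le> C * lp_norm p x))"

definition H_op :: "(int \<Rightarrow> int) \<Rightarrow> (int \<Rightarrow> complex) \<Rightarrow> (int \<Rightarrow> complex)" where
  "H_op v x = (\<lambda>n. x (n + 1) + x (n - 1) + of_int (v n) * x n)"

definition H_plus :: "(int \<Rightarrow> int) \<Rightarrow> (int \<Rightarrow> complex) \<Rightarrow> (int \<Rightarrow> complex)" where
  "H_plus v x = (\<lambda>n. if n \<ge> 0 then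
      (if n + 1 \<ge> 0 then x (n + 1) else 0) + (if n - 1 \<ge> 0 then x (n - 1) else 0)
      + of_int (v n) * x n else 0)"

definition H_minus :: "(int \<Rightarrow> int) \<Rightarrow> (int \<Rightarrow> complex) \<Rightarrow> (int \<Rightarrow> complex)" where
  "H_minus v x = (\<lambda>n. if n \<le> 0 then
      (if n + 1 \<le> 0 then x (n + 1) else 0) + (if n - 1 \<le> 0 then x (n - 1) else 0)
      + of_int (v n) * x n else 0)"

end

theory Submission
  imports Defs
begin

definition is_sol :: "(int \<Rightarrow> int) \<Rightarrow> (int \<Rightarrow> complex) \<Rightarrow> bool" where
  "is_sol v u \<longleftrightarrow> (\<forall>n. u (n+1) + u (n-1) + of_int (v n) * u n = 0)"

lemma is_solD: "is_sol v u \<Longrightarrow> u (n+1) = - u (n-1) - of_int (v n) * u n"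
proof -
  assume "is_sol v u"
  then have h: "u (n+1) + u (n-1) + of_int (v n) * u n = 0" unfolding is_sol_def by blast
  show ?thesis using h by (simp add: eq_neg_iff_add_eq_0 algebra_simps)
qed

lemma is_solD': "is_sol v u \<Longrightarrow> u (n-1) = - u (n+1) - of_int (v n) * u n"
proof -
  assume "is_sol v u"
  then have h: "u (n+1) + u (n-1) + of_int (v n) * u n = 0" unfolding is_sol_def by blast
  show ?thesis using h by (simp add: eq_neg_iff_add_eq_0 algebra_simps)
qed

lemma sol_zero:
  assumes s: "is_sol v u" and z: "u k = 0" "u (k+1) = 0"
  shows "u n = 0"
proof -
  have f: "u (k + int i) = 0 \<and> u (k + int i + 1) = 0" for i
  proof (induction i)
    case 0 then show ?case using z by simp
  next
    case (Suc i)
    have "u (k + int i + 1 + 1) = - u (k + int i + 1 - 1) - of_int (v (k + int i + 1)) * u (k + int i + 1)"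
      using is_solD[OF s] by blast
    then have A: "u (k + int i + 1 + 1) = 0" using Suc by simp
    have e1: "k + int (Suc i) = k + int i + 1" and e2: "k + int (Suc i) + 1 = k + int i + 1 + 1" by simp_all
    show ?case unfolding e1 e2 using A Suc.IH by blast
  qed
  have b: "u (k - int i) = 0 \<and> u (k - int i + 1) = 0" for i
  proof (induction i)
    case 0 then show ?case using z by simp
  next
    case (Suc i)
    have "u (k - int i - 1) = - u (k - int i + 1) - of_int (v (k - int i)) * u (k - int i)"
      using is_solD'[OF s] by blast
    then show ?case using Suc by (simp add: algebra_simps)
  qed
  show ?thesis
  proof (cases "n \<ge> k")
    case True
    then have "n = k + int (nat (n - k))" by simp
    then show ?thesis using f by metis
  next
    case False
    then have "n = k - int (nat (k - n))" by simp
    then show ?thesis using b by metis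
  qed
qed

lemma sol_lin: "is_sol v u \<Longrightarrow> is_sol v w \<Longrightarrow> is_sol v (\<lambda>n. a * u n + b * w n)"
  unfolding is_sol_def
proof
  fix n assume "\<forall>n. u (n + 1) + u (n - 1) + of_int (v n) * u n = 0" "\<forall>n. w (n + 1) + w (n - 1) + of_int (v n) * w n = 0"
  then have "a * (u (n + 1) + u (n - 1) + of_int (v n) * u n) + b * (w (n + 1) + w (n - 1) + of_int (v n) * w n) = 0" by simp
  then show "a * u (n + 1) + b * w (n + 1) + (a * u (n - 1) + b * w (n - 1)) + of_int (v n) * (a * u n + b * w n) = 0"
    by (simp add: algebra_simps)
qed

lemma sol_eq:
  assumes "is_sol v u" "is_sol v w" "u k = w k" "u (k+1) = w (k+1)"
  shows "u = w"
proof
  fix n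
  have "is_sol v (\<lambda>n. 1 * u n + (-1) * w n)" by (rule sol_lin[OF assms(1,2)])
  then have "1 * u n + (-1) * w n = 0" by (rule sol_zero[where k=k]) (use assms in auto)
  then show "u n = w n" by simp
qed

lemma sol_shift:
  assumes "is_sol v u" "\<And>n. v (n + c) = v n"
  shows "is_sol v (\<lambda>n. u (n + c))"
  unfolding is_sol_def
proof
  fix n
  have "u ((n+c) + 1) + u ((n+c) - 1) + of_int (v (n+c)) * u (n+c) = 0" using assms(1) unfolding is_sol_def by blast
  then show "u (n + 1 + c) + u (n - 1 + c) + of_int (v n) * u (n + c) = 0" using assms(2)[of n] by (simp add: algebra_simps)
qed

fun fw :: "(int\<Rightarrow>int) \<Rightarrow> complex \<Rightarrow> complex \<Rightarrow> nat \<Rightarrow> complex \<times> complex" where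
  "fw v a b 0 = (a, b)"
| "fw v a b (Suc k) = (- of_int (v (int k)) * fst (fw v a b k) - snd (fw v a b k), fst (fw v a b k))"

fun bw :: "(int\<Rightarrow>int) \<Rightarrow> complex \<Rightarrow> complex \<Rightarrow> nat \<Rightarrow> complex \<times> complex" where
  "bw v a b 0 = (a, b)"
| "bw v a b (Suc k) = (snd (bw v a b k), - fst (bw v a b k) - of_int (v (- int k - 1)) * snd (bw v a b k))"

definition mksol :: "(int\<Rightarrow>int) \<Rightarrow> complex \<Rightarrow> complex \<Rightarrow> int \<Rightarrow> complex" where
  "mksol v a b n = (if n \<ge> 0 then fst (fw v a b (nat n)) else snd (bw v a b (nat (-n-1))))"

lemma mksol_0: "mksol v a b 0 = a" and mksol_m1: "mksol v a b (-1) = b"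
  by (simp_all add: mksol_def)

lemma mksol_sol: "is_sol v (mksol v a b)"
  unfolding is_sol_def
proof
  fix n :: int
  consider "n \<ge> 1" | "n = 0" | "n \<le> -1" by linarith
  then show "mksol v a b (n + 1) + mksol v a b (n - 1) + of_int (v n) * mksol v a b n = 0"
  proof cases
    case 1
    then obtain k where k: "nat n = Suc k" by (cases "nat n") auto
    then have nk: "n = int k + 1" using 1 by linarith
    have "nat (n+1) = Suc (Suc k)" using nk by simp
    moreover have "nat (n - 1) = k" using nk by simp
    ultimately show ?thesis using 1 k by (simp add: mksol_def nk algebra_simps)
  next
    case 2 then show ?thesis by (simp add: mksol_def)
  next
    case 3
    define k where "k = nat (-n-1)"
    have nk: "n = - int k - 1" using 3 k_def by simp
    have a: "mksol v a b n = snd (bw v a b k)" using 3 by (simp add: mksol_def k_def)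
    have "nat (-(n-1)-1) = Suc k" using nk by simp
    then have b: "mksol v a b (n-1) = snd (bw v a b (Suc k))" using 3 by (simp add: mksol_def)
    have c: "mksol v a b (n+1) = fst (bw v a b k)"
    proof (cases k)
      case 0 then show ?thesis by (simp add: mksol_def nk)
    next
      case (Suc k')
      then have "n + 1 = - int k' - 1" "nat (-(n+1)-1) = k'" using nk by simp_all
      then show ?thesis using Suc by (simp add: mksol_def)
    qed
    show ?thesis unfolding a b c by (simp add: nk)
  qed
qed

lemma per_induct:
  fixes K :: int
  assumes K: "K > 0" and step: "\<And>n. P n \<longleftrightarrow> P (n + K)" and base: "\<And>n. 0 \<le> n \<Longrightarrow> n < K \<Longrightarrow> P n"
  shows "P m"
proof -
  define r where "r = m mod K"
  have r: "0 \<le> r" "r < K" using K by (simp_all add: r_def)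
  have "P (r + K * int j) \<and> P (r - K * int j)" for j
  proof (induction j)
    case 0 then show ?case using base r by simp
  next
    case (Suc j)
    have "P (r + K * int j + K)" using Suc step by blast
    moreover have "P (r - K * int (Suc j))" using Suc step[of "r - K * int (Suc j)"] by (simp add: algebra_simps)
    ultimately show ?case by (simp add: algebra_simps)
  qed
  note H = this
  have m: "m = r + K * (m div K)" by (simp add: r_def)
  show ?thesis
  proof (cases "m div K \<ge> 0")
    case True
    then have "m = r + K * int (nat (m div K))" using m by simp
    then show ?thesis using H by metis
  next
    case False
    then have "m = r - K * int (nat (- (m div K)))" using m by simp
    then show ?thesis using H by metis
  qed
qed

lemma tm_entries:
  "(transfer v k 0 ** M)$1$j = - real_of_int (v k) * M$1$j - M$2$j"
  "(transfer v k 0 ** M)$2$j = M$1$j"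
  by (simp_all add: matrix_matrix_mult_def sum_2 transfer_def)

lemma mono_link:
  assumes s: "is_sol v u"
  shows "u (int k) = of_real (monodromy_aux v k 0 $1$1) * u 0 + of_real (monodromy_aux v k 0 $1$2) * u (-1)
       \<and> u (int k - 1) = of_real (monodromy_aux v k 0 $2$1) * u 0 + of_real (monodromy_aux v k 0 $2$2) * u (-1)"
proof (induction k)
  case 0 then show ?case by (simp add: mat_def)
next
  case (Suc k)
  let ?M = "monodromy_aux v k 0"
  have e: "u (int k + 1) = - u (int k - 1) - of_int (v (int k)) * u (int k)" using is_solD[OF s] by blast
  have i1: "int (Suc k) = int k + 1" and i2: "int (Suc k) - 1 = int k" by simp_all
  have "u (int k + 1) = of_real (- real_of_int (v k) * ?M$1$1 - ?M$2$1) * u 0 + of_real (- real_of_int (v k) * ?M$1$2 - ?M$2$2) * u (-1)"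
    unfolding e using Suc.IH by (simp add: algebra_simps)
  then show ?case unfolding i1 i2 monodromy_aux.simps tm_entries using Suc.IH by simp
qed

lemma mono_det: "monodromy_aux v k 0 $1$1 * monodromy_aux v k 0 $2$2 - monodromy_aux v k 0 $1$2 * monodromy_aux v k 0 $2$1 = 1"
proof (induction k)
  case 0 then show ?case by (simp add: mat_def)
next
  case (Suc k)
  then show ?case by (simp add: matrix_matrix_mult_def sum_2 transfer_def algebra_simps)
qed

lemma sol_comb: "is_sol v u \<Longrightarrow> is_sol v w \<Longrightarrow> (\<And>n. z n = a * u n + b * w n) \<Longrightarrow> is_sol v z"
proof -
  assume "is_sol v u" "is_sol v w" "\<And>n. z n = a * u n + b * w n"
  moreover have "z = (\<lambda>n. a * u n + b * w n)" using calculation(3) by blast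
  ultimately show ?thesis using sol_lin by metis
qed

locale per =
  fixes v :: "int \<Rightarrow> int" and K :: nat
  assumes K1: "K \<ge> 1" and pv: "\<And>n. v (n + int K) = v n"
begin

definition "ma = monodromy_aux v K 0 $1$1"
definition "mb = monodromy_aux v K 0 $1$2"
definition "mc = monodromy_aux v K 0 $2$1"
definition "md = monodromy_aux v K 0 $2$2"
definition "tr = ma + md"

lemma tr_eq: "trace (monodromy v K 0) = tr"
  by (simp add: trace_def sum_2 monodromy_def tr_def ma_def md_def)

lemma det: "ma * md - mb * mc = 1"
  using mono_det[of v K] by (simp add: ma_def mb_def mc_def md_def)

lemma detc: "complex_of_real ma * of_real md - of_real mb * of_real mc = 1"
proof -
  have "complex_of_real (ma * md - mb * mc) = 1" using det by simp
  then show ?thesis by simp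
qed

lemma link:
  assumes "is_sol v u"
  shows "u (int K) = of_real ma * u 0 + of_real mb * u (-1)"
    and "u (int K - 1) = of_real mc * u 0 + of_real md * u (-1)"
  using mono_link[OF assms, of K] by (simp_all add: ma_def mb_def mc_def md_def)

lemma pv2: "v (n + 2 * int K) = v n"
  using pv[of "n + int K"] pv[of n] by (simp add: algebra_simps)

lemma shiftK: "is_sol v u \<Longrightarrow> is_sol v (\<lambda>n. u (n + int K))"
  by (rule sol_shift) (use pv in auto)

lemma CH:
  assumes s: "is_sol v u"
  shows "u (n + 2 * int K) - of_real tr * u (n + int K) + u n = 0"
proof -
  define w where "w n = u (n + 2 * int K) - of_real tr * u (n + int K) + u n" for n
  have s2: "is_sol v (\<lambda>n. u (n + 2 * int K))" by (rule sol_shift[OF s]) (use pv2 in auto)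
  have s1: "is_sol v (\<lambda>n. u (n + int K))" by (rule shiftK[OF s])
  have s3: "is_sol v (\<lambda>n. u (n + 2 * int K) - of_real tr * u (n + int K))"
    by (rule sol_comb[OF s2 s1, where a=1 and b="- of_real tr"]) simp
  have sw: "is_sol v w"
    by (rule sol_comb[OF s3 s, where a=1 and b=1]) (simp add: w_def)
  have l1: "u (int K) = of_real ma * u 0 + of_real mb * u (-1)" "u (int K - 1) = of_real mc * u 0 + of_real md * u (-1)"
    using link[OF s] by blast+
  have l2: "u (int K + int K) = of_real ma * u (int K) + of_real mb * u (int K - 1)"
     "u (int K - 1 + int K) = of_real mc * u (int K) + of_real md * u (int K - 1)"
    using link[OF s1] by simp_all
  have w0: "w 0 = (1 - (of_real ma * of_real md - of_real mb * of_real mc)) * u 0"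
    unfolding w_def using l1 l2 by (simp add: tr_def algebra_simps mult_2)
  have w1: "w (-1) = (1 - (of_real ma * of_real md - of_real mb * of_real mc)) * u (-1)"
  proof -
    have "-1 + 2 * int K = int K - 1 + int K" "-1 + int K = int K - 1" by simp_all
    then show ?thesis unfolding w_def using l1 l2 by (simp add: tr_def algebra_simps)
  qed
  have "w n = 0"
    by (rule sol_zero[OF sw, where k="-1"]) (use w0 w1 detc in simp_all)
  then show ?thesis by (simp add: w_def)
qed

lemma floquet:
  fixes \<mu> :: complex
  assumes root: "\<mu>^2 - of_real tr * \<mu> + 1 = 0"
  shows "\<exists>\<phi>. is_sol v \<phi> \<and> (\<phi> 0 \<noteq> 0 \<or> \<phi> (-1) \<noteq> 0) \<and> (\<forall>n. \<phi> (n + int K) = \<mu> * \<phi> n)"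
proof -
  define \<mu>' where "\<mu>' = of_real tr - \<mu>"
  have mm: "\<mu> * \<mu>' = 1" using root by (simp add: \<mu>'_def power2_eq_square algebra_simps)
  have gen: "\<forall>n. \<phi> (n + int K) = \<mu> * \<phi> n" if s: "is_sol v u" and phi: "\<phi> = (\<lambda>n. u (n + int K) - \<mu>' * u n)" for u \<phi>
  proof
    fix n
    have "\<phi> (n + int K) - \<mu> * \<phi> n = u (n + 2 * int K) - (\<mu> + \<mu>') * u (n + int K) + (\<mu> * \<mu>') * u n"
      unfolding phi by (simp add: algebra_simps mult_2)
    also have "\<dots> = u (n + 2 * int K) - of_real tr * u (n + int K) + u n"
      using mm by (simp add: \<mu>'_def)
    finally have "\<phi> (n + int K) - \<mu> * \<phi> n = u (n + 2 * int K) - of_real tr * u (n + int K) + u n" .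
    then show "\<phi> (n + int K) = \<mu> * \<phi> n" using CH[OF s, of n] by simp
  qed
  have gsol: "is_sol v (\<lambda>n. u (n + int K) - \<mu>' * u n)" if s: "is_sol v u" for u
    by (rule sol_comb[OF shiftK[OF s] s, where a=1 and b="-\<mu>'"]) simp
  define e1 where "e1 = mksol v 1 0"
  define e2 where "e2 = mksol v 0 1"
  have se1: "is_sol v e1" and se2: "is_sol v e2" by (simp_all add: e1_def e2_def mksol_sol)
  have e10: "e1 0 = 1" "e1 (-1) = 0" "e2 0 = 0" "e2 (-1) = 1" by (simp_all add: e1_def e2_def mksol_0 mksol_m1)
  show ?thesis
  proof (cases "of_real ma - \<mu>' \<noteq> 0 \<or> of_real mc \<noteq> (0::complex)")
    case True
    show ?thesis
      apply (rule exI[of _ "\<lambda>n. e1 (n + int K) - \<mu>' * e1 n"])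
      using gsol[OF se1] gen[OF se1 refl] True link[OF se1] e10 by auto
  next
    case F1: False
    show ?thesis
    proof (cases "of_real mb \<noteq> (0::complex) \<or> of_real md - \<mu>' \<noteq> 0")
      case True
      show ?thesis
        apply (rule exI[of _ "\<lambda>n. e2 (n + int K) - \<mu>' * e2 n"])
        using gsol[OF se2] gen[OF se2 refl] True link[OF se2] e10 by auto
    next
      case False
      then have ab: "of_real ma = \<mu>'" "of_real md = \<mu>'" "of_real mb = (0::complex)" "of_real mc = (0::complex)" using F1 by auto
      then have "\<mu>' * \<mu>' = 1" using detc by simp
      then have "\<mu> = \<mu>'" using mm
        by (metis mult_cancel_right mult_zero_left zero_neq_one)
      have "(\<lambda>n. e1 (n + int K)) = (\<lambda>n. \<mu> * e1 n)"
      proof (rule sol_eq[OF shiftK[OF se1], where k="-1"])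
        show "is_sol v (\<lambda>n. \<mu> * e1 n)" by (rule sol_comb[OF se1 se1, where a=\<mu> and b=0]) simp
        show "e1 (-1 + int K) = \<mu> * e1 (-1)" using link(2)[OF se1] ab e10 by (simp add: add.commute)
        show "e1 (-1 + 1 + int K) = \<mu> * e1 (-1 + 1)" using link(1)[OF se1] ab e10 \<open>\<mu> = \<mu>'\<close> by simp
      qed
      then show ?thesis using se1 e10 by (intro exI[of _ e1]) (auto dest: fun_cong)
    qed
  qed
qed

end

lemma root_unit:
  fixes t :: real assumes "\<bar>t\<bar> \<le> 2"
  shows "\<exists>\<mu>::complex. cmod \<mu> = 1 \<and> \<mu>^2 - of_real t * \<mu> + 1 = 0"
proof -
  define s where "s = sqrt (4 - t^2)"
  have t2: "t^2 \<le> 4" using assms by (metis abs_le_square_iff abs_numeral power2_abs real_sqrt_four real_sqrt_pow2 zero_le_numeral) 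
  have ss: "s^2 = 4 - t^2" using t2 by (simp add: s_def)
  define \<mu> where "\<mu> = Complex (t/2) (s/2)"
  have "cmod \<mu> = sqrt ((t/2)^2 + (s/2)^2)" by (simp add: \<mu>_def cmod_def)
  also have "(t/2)^2 + (s/2)^2 = (t^2 + s^2)/4" by (simp add: power_divide add_divide_distrib)
  also have "\<dots> = 1" using ss by simp
  finally have "cmod \<mu> = 1" by simp
  moreover have "\<mu>^2 - of_real t * \<mu> + 1 = 0"
    using ss by (simp add: \<mu>_def complex_eq_iff power2_eq_square Complex_eq algebra_simps)
  ultimately show ?thesis by blast
qed

lemma root_hyp:
  fixes t :: real assumes "\<bar>t\<bar> > 2"
  shows "\<exists>l::real. \<bar>l\<bar> > 1 \<and> l^2 - t * l + 1 = 0"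
proof -
  define s where "s = sqrt (t^2 - 4)"
  have t2: "t^2 > 4" using assms by (metis abs_le_square_iff abs_numeral not_le power2_abs real_sqrt_four real_sqrt_pow2 zero_le_numeral)
  have ss: "s^2 = t^2 - 4" "s \<ge> 0" using t2 by (simp_all add: s_def)
  show ?thesis
  proof (cases "t > 0")
    case True
    then have "t > 2" using assms by simp
    then show ?thesis using ss
      by (intro exI[of _ "(t + s)/2"]) (auto simp: power2_eq_square field_simps)
  next
    case False
    then have "t < -2" using assms by simp
    then show ?thesis using ss
      by (intro exI[of _ "(t - s)/2"]) (auto simp: power2_eq_square field_simps)
  qed
qed

definition wr :: "(int \<Rightarrow> complex) \<Rightarrow> (int \<Rightarrow> complex) \<Rightarrow> int \<Rightarrow> complex" where
  "wr a b n = b (n+1) * a n - b n * a (n+1)"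

lemma wr_const:
  assumes "is_sol v a" "is_sol v b"
  shows "wr a b n = wr a b 0"
proof (rule per_induct[where K=1 and P="\<lambda>n. wr a b n = wr a b 0"])
  fix n :: int
  have ea: "a (n+1+1) = - a n - of_int (v (n+1)) * a (n+1)" using is_solD[OF assms(1), of "n+1"] by simp
  have eb: "b (n+1+1) = - b n - of_int (v (n+1)) * b (n+1)" using is_solD[OF assms(2), of "n+1"] by simp
  have "wr a b (n+1) = wr a b n"
    unfolding wr_def ea eb by (simp add: algebra_simps)
  then show "(wr a b n = wr a b 0) = (wr a b (n + 1) = wr a b 0)" by simp
next
  fix n :: int assume "0 \<le> n" "n < 1"
  then have "n = 0" by simp
  then show "wr a b n = wr a b 0" by simp
qed auto

lemma wr_dep:
  assumes "is_sol v a" "is_sol v b" "wr a b (-1) = 0" "b 0 \<noteq> 0 \<or> b (-1) \<noteq> 0"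
  shows "\<exists>c. a = (\<lambda>n. c * b n)"
proof (cases "b 0 \<noteq> 0")
  case True
  have "a = (\<lambda>n. (a 0 / b 0) * b n)"
  proof (rule sol_eq[OF assms(1), where k="-1"])
    show "is_sol v (\<lambda>n. a 0 / b 0 * b n)" by (rule sol_comb[OF assms(2) assms(2), where a="a 0 / b 0" and b=0]) simp
    show "a (-1) = a 0 / b 0 * b (-1)" using assms(3) True by (simp add: wr_def field_simps)
    show "a (-1 + 1) = a 0 / b 0 * b (-1 + 1)" using True by simp
  qed
  then show ?thesis by blast
next
  case False
  then have B: "b (-1) \<noteq> 0" using assms(4) by blast
  have "a = (\<lambda>n. (a (-1) / b (-1)) * b n)"
  proof (rule sol_eq[OF assms(1), where k="-1"])
    show "is_sol v (\<lambda>n. a (-1) / b (-1) * b n)" by (rule sol_comb[OF assms(2) assms(2), where a="a (-1) / b (-1)" and b=0]) simp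
    show "a (-1) = a (-1) / b (-1) * b (-1)" using B by simp
    show "a (-1 + 1) = a (-1) / b (-1) * b (-1 + 1)" using assms(3) B False by (simp add: wr_def field_simps)
  qed
  then show ?thesis by blast
qed

lemma wr_basis:
  assumes "is_sol v a" "is_sol v b" "wr a b (-1) \<noteq> 0" "is_sol v u"
  shows "\<exists>c1 c2. \<forall>n. u n = c1 * a n + c2 * b n"
proof -
  define D where "D = a 0 * b (-1) - b 0 * a (-1)"
  have D: "D \<noteq> 0" using assms(3) by (simp add: wr_def D_def algebra_simps)
  define c1 where "c1 = (u 0 * b (-1) - b 0 * u (-1)) / D"
  define c2 where "c2 = (a 0 * u (-1) - u 0 * a (-1)) / D"
  have "u = (\<lambda>n. c1 * a n + c2 * b n)"
  proof (rule sol_eq[OF assms(4), where k="-1"])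
    show "is_sol v (\<lambda>n. c1 * a n + c2 * b n)" by (rule sol_lin[OF assms(1,2)])
    have "c1 * a (-1) + c2 * b (-1) = ((u 0 * b (-1) - b 0 * u (-1)) * a (-1) + (a 0 * u (-1) - u 0 * a (-1)) * b (-1)) / D"
      by (simp add: c1_def c2_def add_divide_distrib)
    also have "(u 0 * b (-1) - b 0 * u (-1)) * a (-1) + (a 0 * u (-1) - u 0 * a (-1)) * b (-1) = u (-1) * D"
      by (simp add: D_def algebra_simps)
    finally show "u (-1) = c1 * a (-1) + c2 * b (-1)" using D by simp
    have "c1 * a 0 + c2 * b 0 = ((u 0 * b (-1) - b 0 * u (-1)) * a 0 + (a 0 * u (-1) - u 0 * a (-1)) * b 0) / D"
      by (simp add: c1_def c2_def add_divide_distrib)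
    also have "(u 0 * b (-1) - b 0 * u (-1)) * a 0 + (a 0 * u (-1) - u 0 * a (-1)) * b 0 = u 0 * D"
      by (simp add: D_def algebra_simps)
    finally show "u (-1 + 1) = c1 * a (-1 + 1) + c2 * b (-1 + 1)" using D by simp
  qed
  then show ?thesis by metis
qed

definition green :: "(int \<Rightarrow> complex) \<Rightarrow> (int \<Rightarrow> complex) \<Rightarrow> int \<Rightarrow> int \<Rightarrow> complex" where
  "green a b n m = a (min n m) * b (max n m) / wr a b 0"

lemma green_sym: "green a b n m = green a b m n"
  by (simp add: green_def min.commute max.commute)

lemma green_eq:
  assumes sa: "is_sol v a" and sb: "is_sol v b" and W: "wr a b 0 \<noteq> 0"
  shows "green a b (n+1) m + green a b (n-1) m + of_int (v n) * green a b n m = (if n = m then 1 else 0)"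
proof (cases n m rule: linorder_cases)
  case less
  then have mm: "min (n+1) m = n+1" "max (n+1) m = m" "min (n-1) m = n-1" "max (n-1) m = m" "min n m = n" "max n m = m" by auto
  then have "green a b (n+1) m + green a b (n-1) m + of_int (v n) * green a b n m
     = (a (n+1) + a (n-1) + of_int (v n) * a n) * b m / wr a b 0"
    unfolding green_def mm by (simp add: algebra_simps add_divide_distrib)
  also have "\<dots> = 0" using sa by (simp add: is_sol_def)
  finally show ?thesis using less by simp
next
  case greater
  then have mm: "min (n+1) m = m" "max (n+1) m = n+1" "min (n-1) m = m" "max (n-1) m = n-1" "min n m = m" "max n m = n" by auto
  then have "green a b (n+1) m + green a b (n-1) m + of_int (v n) * green a b n m
     = a m * (b (n+1) + b (n-1) + of_int (v n) * b n) / wr a b 0"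
    unfolding green_def mm by (simp add: algebra_simps add_divide_distrib)
  also have "\<dots> = 0" using sb by (simp add: is_sol_def)
  finally show ?thesis using greater by simp
next
  case equal
  have "green a b (n+1) m + green a b (n-1) m + of_int (v n) * green a b n m
     = (a n * b (n+1) + b n * (a (n-1) + of_int (v n) * a n)) / wr a b 0"
    using equal by (simp add: green_def min_def max_def algebra_simps add_divide_distrib)
  also have "a (n-1) + of_int (v n) * a n = - a (n+1)" using is_solD[OF sa, of n] by simp
  also have "a n * b (n+1) + b n * - a (n+1) = wr a b n" by (simp add: wr_def)
  also have "\<dots> = wr a b 0" by (rule wr_const[OF sa sb])
  finally show ?thesis using equal W by simp
qed

lemma geom_int_summable:
  fixes q :: real assumes q: "0 \<le> q" "q < 1"
  shows "(\<lambda>k::int. q ^ nat \<bar>k\<bar>) summable_on UNIV"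
proof -
  have U: "(UNIV::int set) = range int \<union> range (\<lambda>n. - int n - 1)"
  proof -
    have "k \<in> range int \<union> range (\<lambda>n. - int n - 1)" for k :: int
    proof (cases "k \<ge> 0")
      case True then have "k = int (nat k)" by simp
      then show ?thesis by blast
    next
      case False then have "k = - int (nat (-k-1)) - 1" by simp
      then show ?thesis by blast
    qed
    then show ?thesis by blast
  qed
  have s1: "(\<lambda>k::int. q ^ nat \<bar>k\<bar>) summable_on range int"
    apply (subst summable_on_reindex) apply (simp add: inj_on_def)
    apply (simp add: o_def)
    using summable_on_UNIV_nonneg_real_iff[of "\<lambda>n. q^n"] q summable_geometric[of q] by simp
  have s2: "(\<lambda>k::int. q ^ nat \<bar>k\<bar>) summable_on range (\<lambda>n. - int n - 1)"
  proof -
    have e: "nat \<bar>- int n - 1\<bar> = Suc n" for n by simp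
    have "(\<lambda>n::nat. q ^ Suc n) summable_on UNIV"
      using summable_on_UNIV_nonneg_real_iff[of "\<lambda>n. q^Suc n"] q summable_geometric[of q]
      by (simp add: summable_mult)
    moreover have e': "\<And>x. nat (1 + int x) = Suc x" by simp
    ultimately show ?thesis
      apply (subst summable_on_reindex) apply (simp add: inj_on_def)
      by (simp add: o_def e e')
  qed
  show ?thesis unfolding U by (rule summable_on_union[OF s1 s2])
qed

definition "geo q = (\<Sum>\<^sub>\<infinity>k::int. q ^ nat \<bar>k\<bar>)"

lemma geo_shift:
  fixes q :: real assumes q: "0 \<le> q" "q < 1"
  shows "(\<lambda>m::int. q ^ nat \<bar>n - m\<bar>) summable_on UNIV" "(\<Sum>\<^sub>\<infinity>m::int. q ^ nat \<bar>n - m\<bar>) = geo q"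
    "(\<lambda>m::int. q ^ nat \<bar>m - n\<bar>) summable_on UNIV" "(\<Sum>\<^sub>\<infinity>m::int. q ^ nat \<bar>m - n\<bar>) = geo q"
proof -
  have b: "bij_betw (\<lambda>m. n - m) UNIV (UNIV::int set)"
    by (rule bij_betwI[of _ _ _ "\<lambda>m. n - m"]) auto
  show "(\<lambda>m::int. q ^ nat \<bar>n - m\<bar>) summable_on UNIV"
    using summable_on_reindex_bij_betw[OF b, of "\<lambda>k. q ^ nat \<bar>k\<bar>"] geom_int_summable[OF q] by simp
  show "(\<Sum>\<^sub>\<infinity>m::int. q ^ nat \<bar>n - m\<bar>) = geo q"
    using infsum_reindex_bij_betw[OF b, of "\<lambda>k. q ^ nat \<bar>k\<bar>"] by (simp add: geo_def)
  have e: "\<bar>m - n\<bar> = \<bar>n - m\<bar>" for m :: int by simp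
  show "(\<lambda>m::int. q ^ nat \<bar>m - n\<bar>) summable_on UNIV"
    using summable_on_reindex_bij_betw[OF b, of "\<lambda>k. q ^ nat \<bar>k\<bar>"] geom_int_summable[OF q] by (simp add: e)
  show "(\<Sum>\<^sub>\<infinity>m::int. q ^ nat \<bar>m - n\<bar>) = geo q"
    using infsum_reindex_bij_betw[OF b, of "\<lambda>k. q ^ nat \<bar>k\<bar>"] by (simp add: geo_def e)
qed

lemma geo_ge1:
  fixes q :: real assumes q: "0 \<le> q" "q < 1"
  shows "geo q \<ge> 1"
proof -
  have "sum (\<lambda>k::int. q ^ nat \<bar>k\<bar>) {0} \<le> geo q"
    unfolding geo_def by (rule finite_sum_le_infsum[OF geom_int_summable[OF q]]) (use q in auto)
  then show ?thesis by simp
qed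

lemma infsum_delta: "(\<Sum>\<^sub>\<infinity>m::int. if m = n then (c::'a::{comm_monoid_add,t2_space}) else 0) = c"
proof -
  have "(\<Sum>\<^sub>\<infinity>m::int. if m = n then c else 0) = (\<Sum>\<^sub>\<infinity>m\<in>{n}. if m = n then c else 0)"
    by (rule infsum_cong_neutral) auto
  then show ?thesis by simp
qed

lemma tangent_powr:
  fixes r Y y :: real assumes r: "r \<ge> 1" and Y: "Y > 0" and y: "y \<ge> 0"
  shows "y powr r \<ge> Y powr r + r * Y powr (r - 1) * (y - Y)"
proof (cases "y = 0")
  case True
  have h: "Y powr (r - 1) * Y = Y powr r" using Y by (simp add: powr_diff)
  have "r * Y powr (r - 1) * (y - Y) = - (r * (Y powr (r - 1) * Y))" using True by (simp add: algebra_simps)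
  also have "\<dots> = - (r * Y powr r)" using h by simp
  finally have e: "r * Y powr (r - 1) * (y - Y) = - (r * Y powr r)" .
  have "(1 - r) * Y powr r \<le> 0" using r by (simp add: mult_nonpos_nonneg)
  then show ?thesis unfolding e using True by (simp add: algebra_simps)
next
  case False
  then have yp: "y > 0" using y by simp
  have "y powr r - Y powr r \<ge> (r * Y powr (r - 1)) * (y - Y)"
  proof (rule convex_on_imp_above_tangent[where A="{0<..}"])
    show "convex_on {0<..} (\<lambda>x. x powr r)" by (rule powr_convex[OF r])
    show "connected {0::real<..}" by simp
    show "Y \<in> interior {0<..}" using Y by (simp add: interior_open)
    show "y \<in> {0<..}" using yp by simp
    show "((\<lambda>x. x powr r) has_field_derivative r * Y powr (r - 1)) (at Y within {0<..})"
      by (rule has_field_derivative_at_within[OF has_real_derivative_powr[OF Y]])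
  qed
  then show ?thesis by simp
qed

lemma icm: "f summable_on A \<Longrightarrow> (\<Sum>\<^sub>\<infinity>m\<in>A. c * f m) = c * (\<Sum>\<^sub>\<infinity>m\<in>A. f m)"
  for f :: "'a \<Rightarrow> 'b::{t2_space, topological_semigroup_mult, semiring_0}"
  by (rule infsum_cmult_right) blast

lemma jensen_inf:
  fixes w y :: "int \<Rightarrow> real" and r :: real
  assumes r: "r \<ge> 1" and w0: "\<And>m. w m \<ge> 0" and y0: "\<And>m. y m \<ge> 0"
    and sw: "w summable_on UNIV" and swy: "(\<lambda>m. w m * y m) summable_on UNIV"
    and swyr: "(\<lambda>m. w m * y m powr r) summable_on UNIV" and Wp: "infsum w UNIV > 0"
  shows "(\<Sum>\<^sub>\<infinity>m. w m * y m) powr r \<le> (infsum w UNIV) powr (r - 1) * (\<Sum>\<^sub>\<infinity>m. w m * y m powr r)"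
proof -
  define W where "W = infsum w UNIV"
  define Y where "Y = (\<Sum>\<^sub>\<infinity>m. w m * y m) / W"
  have Wp': "W > 0" using Wp by (simp add: W_def)
  have Y0: "Y \<ge> 0" unfolding Y_def using Wp' by (intro divide_nonneg_pos infsum_nonneg) (use w0 y0 in auto)
  have R0: "(\<Sum>\<^sub>\<infinity>m. w m * y m powr r) \<ge> 0" by (intro infsum_nonneg) (use w0 in auto)
  have sumwy: "(\<Sum>\<^sub>\<infinity>m. w m * y m) = W * Y" using Wp' by (simp add: Y_def)
  show ?thesis
  proof (cases "Y = 0")
    case True
    then show ?thesis using R0 Wp' sumwy unfolding W_def[symmetric] by simp
  next
    case False
    then have Yp: "Y > 0" using Y0 by simp
    have "(\<Sum>\<^sub>\<infinity>m. w m * (Y powr r + r * Y powr (r - 1) * (y m - Y))) \<le> (\<Sum>\<^sub>\<infinity>m. w m * y m powr r)"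
    proof (rule infsum_mono)
      have "(\<lambda>m. Y powr r * w m + (r * Y powr (r - 1)) * (w m * y m) + (- (r * Y powr (r - 1) * Y)) * w m) summable_on UNIV"
        by (intro summable_on_add summable_on_cmult_right sw swy)
      then show "(\<lambda>m. w m * (Y powr r + r * Y powr (r - 1) * (y m - Y))) summable_on UNIV"
        by (simp add: algebra_simps)
      show "(\<lambda>m. w m * y m powr r) summable_on UNIV" by (rule swyr)
      fix m
      show "w m * (Y powr r + r * Y powr (r - 1) * (y m - Y)) \<le> w m * y m powr r"
        by (rule mult_left_mono[OF tangent_powr[OF r Yp y0] w0])
    qed
    moreover have "(\<Sum>\<^sub>\<infinity>m. w m * (Y powr r + r * Y powr (r - 1) * (y m - Y))) = W * Y powr r"
    proof -
      have "(\<Sum>\<^sub>\<infinity>m. w m * (Y powr r + r * Y powr (r - 1) * (y m - Y)))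
          = (\<Sum>\<^sub>\<infinity>m. Y powr r * w m + (r * Y powr (r - 1)) * (w m * y m) + (- (r * Y powr (r - 1) * Y)) * w m)"
        by (simp add: algebra_simps)
      also have "\<dots> = Y powr r * W + (r * Y powr (r - 1)) * (W * Y) + (- (r * Y powr (r - 1) * Y)) * W"
        apply (subst infsum_add) apply (intro summable_on_add summable_on_cmult_right sw swy)
         apply (intro summable_on_cmult_right sw)
        apply (subst infsum_add) apply (intro summable_on_cmult_right sw) apply (intro summable_on_cmult_right swy)
        unfolding icm[OF sw] icm[OF swy] by (simp add: W_def sumwy[unfolded W_def])
      finally show ?thesis by (simp add: algebra_simps)
    qed
    ultimately have main: "W * Y powr r \<le> (\<Sum>\<^sub>\<infinity>m. w m * y m powr r)" by simp
    have "(\<Sum>\<^sub>\<infinity>m. w m * y m) powr r = W powr r * Y powr r"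
      unfolding sumwy using Wp' Y0 by (simp add: powr_mult)
    also have "\<dots> = W powr (r - 1) * (W * Y powr r)"
      using Wp' by (simp add: powr_diff)
    also have "\<dots> \<le> W powr (r - 1) * (\<Sum>\<^sub>\<infinity>m. w m * y m powr r)"
      by (rule mult_left_mono[OF main]) simp
    finally show ?thesis by (simp add: W_def)
  qed
qed

lemma tonelli_geo:
  fixes q :: real and z :: "int \<Rightarrow> real"
  assumes q: "0 \<le> q" "q < 1" and z0: "\<And>m. z m \<ge> 0" and sz: "z summable_on UNIV"
  shows "(\<lambda>n. \<Sum>\<^sub>\<infinity>m. q ^ nat \<bar>n - m\<bar> * z m) summable_on UNIV"
    and "(\<Sum>\<^sub>\<infinity>n. \<Sum>\<^sub>\<infinity>m. q ^ nat \<bar>n - m\<bar> * z m) = geo q * infsum z UNIV"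
proof -
  define f where "f n m = q ^ nat \<bar>n - m\<bar> * z m" for n m :: int
  have f0: "f n m \<ge> 0" for n m using q z0 by (simp add: f_def)
  have bnd: "sum (\<lambda>(n,m). f n m) F \<le> geo q * infsum z UNIV" if F: "finite F" for F
  proof -
    define A where "A = fst ` F"
    define B where "B = snd ` F"
    have fin: "finite A" "finite B" using F by (simp_all add: A_def B_def)
    have "sum (\<lambda>(n,m). f n m) F \<le> sum (\<lambda>(n,m). f n m) (A \<times> B)"
      by (rule sum_mono2) (use fin F f0 in \<open>auto simp: A_def B_def intro: rev_image_eqI\<close>)
    also have "\<dots> = (\<Sum>m\<in>B. \<Sum>n\<in>A. f n m)"
      by (simp add: sum.cartesian_product[symmetric] sum.swap[of _ A B])
    also have "\<dots> = (\<Sum>m\<in>B. z m * (\<Sum>n\<in>A. q ^ nat \<bar>n - m\<bar>))"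
      by (simp add: f_def sum_distrib_left mult.commute)
    also have "\<dots> \<le> (\<Sum>m\<in>B. z m * geo q)"
    proof (rule sum_mono, rule mult_left_mono[OF _ z0])
      fix m
      show "(\<Sum>n\<in>A. q ^ nat \<bar>n - m\<bar>) \<le> geo q"
        using finite_sum_le_infsum[OF geo_shift(3)[OF q, of m], of A] fin q geo_shift(4)[OF q, of m] by simp
    qed
    also have "\<dots> = geo q * (\<Sum>m\<in>B. z m)" by (simp add: sum_distrib_left mult.commute)
    also have "\<dots> \<le> geo q * infsum z UNIV"
      by (rule mult_left_mono[OF finite_sum_le_infsum[OF sz fin(2)]]) (use z0 geo_ge1[OF q] in auto)
    finally show ?thesis .
  qed
  have sp: "(\<lambda>(n,m). f n m) summable_on (UNIV \<times> UNIV)"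
    by (rule nonneg_bdd_above_summable_on) (use f0 bnd in \<open>auto intro!: bdd_aboveI[where M="geo q * infsum z UNIV"]\<close>)
  show "(\<lambda>n. \<Sum>\<^sub>\<infinity>m. q ^ nat \<bar>n - m\<bar> * z m) summable_on UNIV"
    using summable_on_Sigma_banach[OF sp] by (simp add: f_def)
  have "(\<Sum>\<^sub>\<infinity>n. \<Sum>\<^sub>\<infinity>m. f n m) = (\<Sum>\<^sub>\<infinity>m. \<Sum>\<^sub>\<infinity>n. f n m)"
    by (rule infsum_swap_banach[OF sp])
  also have "\<dots> = (\<Sum>\<^sub>\<infinity>m. geo q * z m)"
  proof (rule infsum_cong)
    fix m
    have "(\<Sum>\<^sub>\<infinity>n. f n m) = (\<Sum>\<^sub>\<infinity>n. q ^ nat \<bar>n - m\<bar>) * z m"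
      unfolding f_def by (rule infsum_cmult_left) (use geo_shift(3)[OF q, of m] in simp)
    then show "(\<Sum>\<^sub>\<infinity>n. f n m) = geo q * z m" using geo_shift(4)[OF q, of m] by simp
  qed
  also have "\<dots> = geo q * infsum z UNIV" by (rule icm[OF sz])
  finally show "(\<Sum>\<^sub>\<infinity>n. \<Sum>\<^sub>\<infinity>m. q ^ nat \<bar>n - m\<bar> * z m) = geo q * infsum z UNIV" by (simp add: f_def)
qed

lemma kern_summable:
  fixes f :: "int \<Rightarrow> complex"
  assumes q: "0 \<le> q" "q < 1" and b: "\<And>m. cmod (f m) \<le> D * q ^ nat \<bar>c - m\<bar>"
  shows "f summable_on UNIV" "(\<lambda>m. norm (f m)) summable_on UNIV"
proof -
  have "(\<lambda>m. D * q ^ nat \<bar>c - m\<bar>) summable_on UNIV"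
    by (rule summable_on_cmult_right[OF geo_shift(1)[OF q]])
  moreover have "D * q ^ nat \<bar>c - m\<bar> \<ge> 0" for m using b[of m] norm_ge_zero order_trans by blast
  ultimately show fa: "(\<lambda>m. norm (f m)) summable_on UNIV"
    using summable_on_comparison_test[of "\<lambda>m. D * q ^ nat \<bar>c - m\<bar>" UNIV "\<lambda>m. norm (f m)"] b by auto
  then show "f summable_on UNIV" by (simp add: summable_on_iff_abs_summable_on_complex)
qed

lemma real_kern_summable:
  fixes f :: "int \<Rightarrow> real"
  assumes q: "0 \<le> q" "q < 1" and b: "\<And>m. 0 \<le> f m" "\<And>m. f m \<le> D * q ^ nat \<bar>c - m\<bar>"
  shows "f summable_on UNIV"
  by (rule summable_on_comparison_test[OF summable_on_cmult_right[OF geo_shift(1)[OF q]]]) (use b in auto)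

lemma lp_supp: "x \<in> lp_space p S \<Longrightarrow> n \<notin> S \<Longrightarrow> x n = 0"
  by (simp add: lp_space_def)

lemma p_real:
  assumes "1 \<le> p" "p \<noteq> \<infinity>"
  shows "real_of_ereal p \<ge> 1" "p = ereal (real_of_ereal p)"
  using assms by (cases p; auto)+

lemma lp_bounded:
  assumes "x \<in> lp_space p S" "1 \<le> p"
  shows "\<exists>Bd. \<forall>n. cmod (x n) \<le> Bd"
proof (cases "p = \<infinity>")
  case True
  then have "bounded (range x)" using assms by (simp add: lp_space_def)
  then show ?thesis by (auto simp: bounded_iff)
next
  case False
  define r where "r = real_of_ereal p"
  have r1: "r \<ge> 1" using p_real[OF assms(2) False] by (simp add: r_def)
  have s: "(\<lambda>n. cmod (x n) powr r) summable_on UNIV" using assms False by (simp add: lp_space_def r_def)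
  show ?thesis
  proof (rule exI[of _ "(infsum (\<lambda>n. cmod (x n) powr r) UNIV) powr (1/r)"], rule allI)
    fix n
    have "sum (\<lambda>n. cmod (x n) powr r) {n} \<le> infsum (\<lambda>n. cmod (x n) powr r) UNIV"
      by (rule finite_sum_le_infsum[OF s]) auto
    then have "(cmod (x n) powr r) powr (1/r) \<le> (infsum (\<lambda>n. cmod (x n) powr r) UNIV) powr (1/r)"
      using r1 by (intro powr_mono2) auto
    moreover have "(cmod (x n) powr r) powr (1/r) = cmod (x n)" using r1 by (simp add: powr_powr)
    ultimately show "cmod (x n) \<le> (infsum (\<lambda>n. cmod (x n) powr r) UNIV) powr (1/r)" by simp
  qed
qed

lemma lp_inf_norm:
  assumes "x \<in> lp_space \<infinity> S"
  shows "cmod (x n) \<le> lp_norm \<infinity> x"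
proof -
  have "bounded (range x)" using assms by (simp add: lp_space_def)
  then have "bdd_above (range (\<lambda>n. cmod (x n)))"
    by (auto simp: bounded_iff bdd_above_def)
  then show ?thesis unfolding lp_norm_def by (simp, intro cSUP_upper) auto
qed

lemma norm_infsum_le_kern:
  fixes f :: "int \<Rightarrow> complex" and g :: "int \<Rightarrow> real"
  assumes "(\<lambda>m. norm (f m)) summable_on UNIV" "g summable_on UNIV" "\<And>m. norm (f m) \<le> g m"
  shows "norm (infsum f UNIV) \<le> infsum g UNIV"
proof -
  have "norm (infsum f UNIV) \<le> infsum (\<lambda>m. norm (f m)) UNIV" by (rule norm_infsum_bound) (use assms(1) in simp)
  also have "\<dots> \<le> infsum g UNIV" by (rule infsum_mono) (use assms in auto)
  finally show ?thesis .
qed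

theorem kernel_inv:
  fixes p :: ereal and S :: "int set" and G :: "int \<Rightarrow> int \<Rightarrow> complex"
    and A :: "(int \<Rightarrow> complex) \<Rightarrow> (int \<Rightarrow> complex)" and v :: "int \<Rightarrow> int"
  assumes p: "1 \<le> p" and C: "C > 0" and q: "0 \<le> q" "q < 1"
    and Gb: "\<And>n m. cmod (G n m) \<le> C * q ^ nat \<bar>n - m\<bar>"
    and Gs: "\<And>n m. G n m = G m n"
    and GS: "\<And>n m. n \<notin> S \<Longrightarrow> G n m = 0"
    and Geq: "\<And>k m. k \<in> S \<Longrightarrow> m \<in> S \<Longrightarrow> G (k+1) m + G (k-1) m + of_int (v k) * G k m = (if k = m then 1 else 0)"
    and vb: "\<And>n. \<bar>v n\<bar> \<le> V"
    and Af: "\<And>x. (\<forall>n. n \<notin> S \<longrightarrow> x n = 0) \<Longrightarrow> A x = (\<lambda>n. if n \<in> S then x (n+1) + x (n-1) + of_int (v n) * x n else 0)"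
  shows "lp_invertible p S A"
proof -
  define B where "B x = (\<lambda>n. \<Sum>\<^sub>\<infinity>m. G n m * x m)" for x :: "int \<Rightarrow> complex"
  define W where "W = C * geo q"
  have W0: "W > 0" using C geo_ge1[OF q] by (simp add: W_def)
  have V0: "V \<ge> 0" using vb[of 0] by simp
  have summ: "(\<lambda>m. G n m * x m) summable_on UNIV" "(\<lambda>m. norm (G n m * x m)) summable_on UNIV"
    and nb: "norm (G n m * x m) \<le> C * q ^ nat \<bar>n - m\<bar> * cmod (x m)"
    if bd: "\<And>m. cmod (x m) \<le> Bd" for x n m Bd
  proof -
    have b: "cmod (G n m * x m) \<le> (C * Bd) * q ^ nat \<bar>n - m\<bar>" for m
    proof -
      have "cmod (G n m * x m) = cmod (G n m) * cmod (x m)" by (simp add: norm_mult)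
      also have "\<dots> \<le> (C * q ^ nat \<bar>n - m\<bar>) * Bd"
        by (rule mult_mono[OF Gb bd]) (use C q in auto)
      finally show ?thesis by (simp add: algebra_simps)
    qed
    show "(\<lambda>m. G n m * x m) summable_on UNIV" by (rule kern_summable(1)[OF q b])
    show "(\<lambda>m. norm (G n m * x m)) summable_on UNIV" by (rule kern_summable(2)[OF q b])
    show "norm (G n m * x m) \<le> C * q ^ nat \<bar>n - m\<bar> * cmod (x m)"
      by (simp add: norm_mult mult_right_mono[OF Gb])
  qed
  have wsumm: "(\<lambda>m. C * q ^ nat \<bar>n - m\<bar> * y m) summable_on UNIV" "(\<Sum>\<^sub>\<infinity>m. C * q ^ nat \<bar>n - m\<bar> * y m) \<le> W * Bd"
    if y: "\<And>m. 0 \<le> y m" "\<And>m. y m \<le> Bd" for y :: "int \<Rightarrow> real" and n Bd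
  proof -
    show s: "(\<lambda>m. C * q ^ nat \<bar>n - m\<bar> * y m) summable_on UNIV"
      by (rule real_kern_summable[OF q, where D="C * Bd" and c=n]) (use y C q in \<open>auto intro!: mult_left_mono mult_right_mono simp: mult_ac\<close>)
    have "(\<Sum>\<^sub>\<infinity>m. C * q ^ nat \<bar>n - m\<bar> * y m) \<le> (\<Sum>\<^sub>\<infinity>m. (C * Bd) * q ^ nat \<bar>n - m\<bar>)"
      by (rule infsum_mono[OF s summable_on_cmult_right[OF geo_shift(1)[OF q]]]) (use y C q in \<open>auto intro!: mult_left_mono mult_right_mono simp: mult_ac\<close>)
    also have "\<dots> = W * Bd" using icm[OF geo_shift(1)[OF q, of n], of "C * Bd"] geo_shift(2)[OF q, of n] by (simp add: W_def)
    finally show "(\<Sum>\<^sub>\<infinity>m. C * q ^ nat \<bar>n - m\<bar> * y m) \<le> W * Bd" .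
  qed
  have Bpt: "cmod (B x n) \<le> (\<Sum>\<^sub>\<infinity>m. C * q ^ nat \<bar>n - m\<bar> * cmod (x m))"
    if bd: "\<And>m. cmod (x m) \<le> Bd" for x n Bd
  proof -
    have s1: "(\<lambda>m. norm (G n m * x m)) summable_on UNIV" by (rule summ(2)) (rule bd)
    have s2: "(\<lambda>m. C * q ^ nat \<bar>n - m\<bar> * cmod (x m)) summable_on UNIV" by (rule wsumm(1)) (use bd in auto)
    have s3: "\<And>m. norm (G n m * x m) \<le> C * q ^ nat \<bar>n - m\<bar> * cmod (x m)" by (rule nb) (rule bd)
    show ?thesis unfolding B_def by (rule norm_infsum_le_kern[OF s1 s2 s3])
  qed
  have Bsupp: "B x n = 0" if "n \<notin> S" for x n using GS[OF that] by (simp add: B_def)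
  have into: "B x \<in> lp_space p S \<and> lp_norm p (B x) \<le> W * lp_norm p x" if x: "x \<in> lp_space p S" for x
  proof -
    obtain Bd where bd: "\<And>m. cmod (x m) \<le> Bd" using lp_bounded[OF x p] by blast
    show ?thesis
    proof (cases "p = \<infinity>")
      case True
      have xin: "x \<in> lp_space \<infinity> S" using x True by simp
      have pt: "cmod (B x n) \<le> W * lp_norm \<infinity> x" for n
      proof -
        have "cmod (B x n) \<le> (\<Sum>\<^sub>\<infinity>m. C * q ^ nat \<bar>n - m\<bar> * cmod (x m))" by (rule Bpt[OF bd])
        also have "\<dots> \<le> W * lp_norm \<infinity> x" by (rule wsumm(2)) (use lp_inf_norm[OF xin] in auto)
        finally show ?thesis .
      qed
      have "bounded (range (B x))" unfolding bounded_iff using pt by blast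
      then have "B x \<in> lp_space p S" using True Bsupp by (simp add: lp_space_def)
      moreover have "lp_norm p (B x) \<le> W * lp_norm p x"
        using True pt by (simp add: lp_norm_def cSUP_least)
      ultimately show ?thesis by blast
    next
      case False
      define r where "r = real_of_ereal p"
      have r1: "r \<ge> 1" using p_real[OF p False] by (simp add: r_def)
      define z where "z = (\<lambda>m. cmod (x m) powr r)"
      have sz: "z summable_on UNIV" using x False by (simp add: lp_space_def r_def z_def)
      have z0: "z m \<ge> 0" for m by (simp add: z_def)
      define T where "T = (\<lambda>n. \<Sum>\<^sub>\<infinity>m. q ^ nat \<bar>n - m\<bar> * z m)"
      have sT: "T summable_on UNIV" and iT: "infsum T UNIV = geo q * infsum z UNIV"
        using tonelli_geo[OF q z0 sz] by (simp_all add: T_def)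
      have zb: "z m \<le> Bd powr r" for m unfolding z_def by (rule powr_mono2) (use r1 bd in auto)
      have pt: "cmod (B x n) powr r \<le> W powr (r - 1) * C * T n" for n
      proof -
        have "cmod (B x n) powr r \<le> (\<Sum>\<^sub>\<infinity>m. C * q ^ nat \<bar>n - m\<bar> * cmod (x m)) powr r"
          by (rule powr_mono2) (use r1 Bpt[OF bd] in auto)
        also have "\<dots> \<le> (\<Sum>\<^sub>\<infinity>m. C * q ^ nat \<bar>n - m\<bar>) powr (r - 1) * (\<Sum>\<^sub>\<infinity>m. C * q ^ nat \<bar>n - m\<bar> * cmod (x m) powr r)"
        proof (rule jensen_inf[OF r1])
          show "(\<lambda>m. C * q ^ nat \<bar>n - m\<bar>) summable_on UNIV" by (rule summable_on_cmult_right[OF geo_shift(1)[OF q]])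
          show "(\<lambda>m. C * q ^ nat \<bar>n - m\<bar> * cmod (x m)) summable_on UNIV" by (rule wsumm(1)[of _ Bd]) (use bd in auto)
          show "(\<lambda>m. C * q ^ nat \<bar>n - m\<bar> * cmod (x m) powr r) summable_on UNIV"
            by (rule wsumm(1)[of _ "Bd powr r"]) (use zb in \<open>auto simp: z_def\<close>)
          show "0 < (\<Sum>\<^sub>\<infinity>m. C * q ^ nat \<bar>n - m\<bar>)"
            using icm[OF geo_shift(1)[OF q, of n], of C] geo_shift(2)[OF q, of n] W0 by (simp add: W_def)
        qed (use C q in auto)
        also have "\<dots> = W powr (r - 1) * C * T n"
        proof -
          have a1: "(\<Sum>\<^sub>\<infinity>m. C * q ^ nat \<bar>n - m\<bar>) = W"
            using icm[OF geo_shift(1)[OF q, of n], of C] geo_shift(2)[OF q, of n] by (simp add: W_def)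
          have sq: "(\<lambda>m. q ^ nat \<bar>n - m\<bar> * z m) summable_on UNIV"
            by (rule real_kern_summable[OF q, where D="Bd powr r" and c=n]) (use z0 zb q in \<open>auto intro!: mult_left_mono mult_right_mono simp: mult_ac\<close>)
          have "(\<Sum>\<^sub>\<infinity>m. C * q ^ nat \<bar>n - m\<bar> * cmod (x m) powr r) = (\<Sum>\<^sub>\<infinity>m. C * (q ^ nat \<bar>n - m\<bar> * z m))"
            by (simp add: z_def mult.assoc)
          also have "\<dots> = C * T n" unfolding T_def by (rule icm[OF sq])
          finally show ?thesis using a1 by simp
        qed
        finally show ?thesis .
      qed
      have sB: "(\<lambda>n. cmod (B x n) powr r) summable_on UNIV"
        by (rule summable_on_comparison_test[OF summable_on_cmult_right[OF sT, of "W powr (r - 1) * C"]]) (use pt in auto)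
      have "infsum (\<lambda>n. cmod (B x n) powr r) UNIV \<le> infsum (\<lambda>n. W powr (r - 1) * C * T n) UNIV"
        by (rule infsum_mono[OF sB summable_on_cmult_right[OF sT]]) (use pt in auto)
      also have "\<dots> = W powr (r - 1) * C * (geo q * infsum z UNIV)"
        using icm[OF sT, of "W powr (r - 1) * C"] iT by simp
      also have "\<dots> = (W powr (r - 1) * W) * infsum z UNIV" by (simp add: W_def mult_ac)
      also have "W powr (r - 1) * W = W powr r" using W0 by (simp add: powr_diff)
      
      finally have ib: "infsum (\<lambda>n. cmod (B x n) powr r) UNIV \<le> W powr r * infsum z UNIV" .
      have "B x \<in> lp_space p S" using False sB Bsupp by (simp add: lp_space_def r_def)
      moreover have "lp_norm p (B x) \<le> W * lp_norm p x"
      proof -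
        have "lp_norm p (B x) = (infsum (\<lambda>n. cmod (B x n) powr r) UNIV) powr (1/r)"
          using False by (simp add: lp_norm_def r_def)
        also have "\<dots> \<le> (W powr r * infsum z UNIV) powr (1/r)"
          by (rule powr_mono2) (use ib r1 in \<open>auto intro!: infsum_nonneg\<close>)
        also have "\<dots> = W * (infsum z UNIV) powr (1/r)"
          using W0 r1 by (simp add: powr_mult infsum_nonneg z0 powr_powr)
        also have "\<dots> = W * lp_norm p x" using False by (simp add: lp_norm_def r_def z_def)
        finally show ?thesis .
      qed
      ultimately show ?thesis by blast
    qed
  qed
  have lin: "B (\<lambda>n. a * x n + b * y n) = (\<lambda>n. a * B x n + b * B y n)"
    if x: "x \<in> lp_space p S" and y: "y \<in> lp_space p S" for x y a b
  proof
    fix n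
    obtain Bx where bx: "\<And>m. cmod (x m) \<le> Bx" using lp_bounded[OF x p] by blast
    obtain By where by': "\<And>m. cmod (y m) \<le> By" using lp_bounded[OF y p] by blast
    have sx: "(\<lambda>m. G n m * x m) summable_on UNIV" by (rule summ(1)) (rule bx)
    have sy: "(\<lambda>m. G n m * y m) summable_on UNIV" by (rule summ(1)) (rule by')
    have "B (\<lambda>n. a * x n + b * y n) n = (\<Sum>\<^sub>\<infinity>m. a * (G n m * x m) + b * (G n m * y m))"
      by (simp add: B_def algebra_simps)
    also have "\<dots> = a * B x n + b * B y n"
      by (subst infsum_add) (use sx sy in \<open>auto intro: summable_on_cmult_right simp: icm B_def\<close>)
    finally show "B (\<lambda>n. a * x n + b * y n) n = a * B x n + b * B y n" .
  qed
  have AB: "A (B x) = x" if x: "x \<in> lp_space p S" for x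
  proof -
    obtain Bd where bd: "\<And>m. cmod (x m) \<le> Bd" using lp_bounded[OF x p] by blast
    have "A (B x) = (\<lambda>n. if n \<in> S then B x (n+1) + B x (n-1) + of_int (v n) * B x n else 0)"
      by (rule Af) (use Bsupp in blast)
    also have "\<dots> = x"
    proof
      fix n
      show "(if n \<in> S then B x (n+1) + B x (n-1) + of_int (v n) * B x n else 0) = x n"
      proof (cases "n \<in> S")
        case False then show ?thesis using lp_supp[OF x] by simp
      next
        case True
        have s1: "(\<lambda>m. G (n+1) m * x m) summable_on UNIV" by (rule summ(1)) (rule bd)
        have s2: "(\<lambda>m. G (n-1) m * x m) summable_on UNIV" by (rule summ(1)) (rule bd)
        have s3: "(\<lambda>m. G n m * x m) summable_on UNIV" by (rule summ(1)) (rule bd)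
        have "B x (n+1) + B x (n-1) + of_int (v n) * B x n
            = (\<Sum>\<^sub>\<infinity>m. G (n+1) m * x m + G (n-1) m * x m + of_int (v n) * (G n m * x m))"
          apply (subst infsum_add) apply (intro summable_on_add s1 s2) apply (intro summable_on_cmult_right s3)
          apply (subst infsum_add) apply (intro s1) apply (intro s2)
          by (simp add: icm[OF s3] B_def)
        also have "\<dots> = (\<Sum>\<^sub>\<infinity>m. if m = n then x n else 0)"
        proof (rule infsum_cong)
          fix m
          show "G (n+1) m * x m + G (n-1) m * x m + of_int (v n) * (G n m * x m) = (if m = n then x n else 0)"
          proof (cases "m \<in> S")
            case True
            have "G (n+1) m * x m + G (n-1) m * x m + of_int (v n) * (G n m * x m)
               = (G (n+1) m + G (n-1) m + of_int (v n) * G n m) * x m" by (simp add: algebra_simps)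
            also have "\<dots> = (if n = m then 1 else 0) * x m" using Geq[OF \<open>n \<in> S\<close> True] by simp
            finally show ?thesis by auto
          next
            case False
            then have "m \<noteq> n" using \<open>n \<in> S\<close> by auto
            then show ?thesis using lp_supp[OF x False] by simp
          qed
        qed
        also have "\<dots> = x n" by (rule infsum_delta)
        finally show ?thesis using True by simp
      qed
    qed
    finally show ?thesis .
  qed
  have BA: "B (A x) = x" if x: "x \<in> lp_space p S" for x
  proof
    fix n
    obtain Bd where bd: "\<And>m. cmod (x m) \<le> Bd" using lp_bounded[OF x p] by blast
    have Bd0: "Bd \<ge> 0" using bd[of 0] norm_ge_zero order_trans by blast
    have Ax: "A x = (\<lambda>n. if n \<in> S then x (n+1) + x (n-1) + of_int (v n) * x n else 0)"
      by (rule Af) (use lp_supp[OF x] in blast)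
    show "B (A x) n = x n"
    proof (cases "n \<in> S")
      case False then show ?thesis using lp_supp[OF x] Bsupp by simp
    next
      case nS: True
      have gb: "cmod (G n m * x k) \<le> (C * Bd) * q ^ nat \<bar>n - m\<bar>" for m k
      proof -
        have "cmod (G n m * x k) = cmod (G n m) * cmod (x k)" by (simp add: norm_mult)
        also have "\<dots> \<le> (C * q ^ nat \<bar>n - m\<bar>) * Bd" by (rule mult_mono[OF Gb bd]) (use C q in auto)
        finally show ?thesis by (simp add: algebra_simps)
      qed
      have sa: "(\<lambda>m. G n m * x (m+1)) summable_on UNIV" by (rule kern_summable(1)[OF q gb])
      have sb: "(\<lambda>m. G n m * x (m-1)) summable_on UNIV" by (rule kern_summable(1)[OF q gb])
      have sc: "(\<lambda>m. of_int (v m) * (G n m * x m)) summable_on UNIV"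
      proof (rule kern_summable(1)[OF q, where D="V * (C * Bd)" and c=n])
        fix m
        have "cmod (of_int (v m) * (G n m * x m)) = \<bar>real_of_int (v m)\<bar> * cmod (G n m * x m)"
          by (simp add: norm_mult)
        also have "\<dots> \<le> V * ((C * Bd) * q ^ nat \<bar>n - m\<bar>)"
        proof (rule mult_mono)
          show "\<bar>real_of_int (v m)\<bar> \<le> real_of_int V" by (metis of_int_abs of_int_le_iff vb)
        qed (use gb V0 in auto)
        finally show "cmod (of_int (v m) * (G n m * x m)) \<le> V * (C * Bd) * q ^ nat \<bar>n - m\<bar>" by (simp add: mult_ac)
      qed
      have gb1: "cmod (G n (k-1) * x k) \<le> (C * Bd) * q ^ nat \<bar>(n+1) - k\<bar>" for k
        using gb[of "k-1" k] by (simp add: algebra_simps)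
      have gb2: "cmod (G n (k+1) * x k) \<le> (C * Bd) * q ^ nat \<bar>(n-1) - k\<bar>" for k
        using gb[of "k+1" k] by (simp add: algebra_simps)
      have sa': "(\<lambda>k. G n (k-1) * x k) summable_on UNIV" by (rule kern_summable(1)[OF q gb1])
      have sb': "(\<lambda>k. G n (k+1) * x k) summable_on UNIV" by (rule kern_summable(1)[OF q gb2])
      have bij1: "bij_betw (\<lambda>k. k - 1) UNIV (UNIV::int set)" by (rule bij_betwI[of _ _ _ "\<lambda>k. k + 1"]) auto
      have bij2: "bij_betw (\<lambda>k. k + 1) UNIV (UNIV::int set)" by (rule bij_betwI[of _ _ _ "\<lambda>k. k - 1"]) auto
      have ia: "(\<Sum>\<^sub>\<infinity>m. G n m * x (m+1)) = (\<Sum>\<^sub>\<infinity>k. G n (k-1) * x k)"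
        using infsum_reindex_bij_betw[OF bij1, of "\<lambda>m. G n m * x (m+1)"] by simp
      have ib: "(\<Sum>\<^sub>\<infinity>m. G n m * x (m-1)) = (\<Sum>\<^sub>\<infinity>k. G n (k+1) * x k)"
        using infsum_reindex_bij_betw[OF bij2, of "\<lambda>m. G n m * x (m-1)"] by simp
      have "B (A x) n = (\<Sum>\<^sub>\<infinity>m. G n m * x (m+1) + G n m * x (m-1) + of_int (v m) * (G n m * x m))"
        unfolding B_def Ax
      proof (rule infsum_cong)
        fix m
        show "G n m * (if m \<in> S then x (m+1) + x (m-1) + of_int (v m) * x m else 0)
          = G n m * x (m+1) + G n m * x (m-1) + of_int (v m) * (G n m * x m)"
        proof (cases "m \<in> S")
          case True then show ?thesis by (simp add: algebra_simps)
        next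
          case False then have "G n m = 0" using GS Gs by metis
          then show ?thesis by simp
        qed
      qed
      also have "\<dots> = (\<Sum>\<^sub>\<infinity>m. G n m * x (m+1)) + (\<Sum>\<^sub>\<infinity>m. G n m * x (m-1)) + (\<Sum>\<^sub>\<infinity>m. of_int (v m) * (G n m * x m))"
        by (subst infsum_add, intro summable_on_add sa sb sc, intro sc, subst infsum_add, intro sa, intro sb, rule refl)
      also have "\<dots> = (\<Sum>\<^sub>\<infinity>k. G n (k-1) * x k + G n (k+1) * x k + of_int (v k) * (G n k * x k))"
        unfolding ia ib
        by (subst infsum_add, intro summable_on_add sa' sb', intro sc, subst infsum_add, intro sa', intro sb', rule refl)
      also have "\<dots> = (\<Sum>\<^sub>\<infinity>k. if k = n then x n else 0)"
      proof (rule infsum_cong)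
        fix k
        show "G n (k-1) * x k + G n (k+1) * x k + of_int (v k) * (G n k * x k) = (if k = n then x n else 0)"
        proof (cases "k \<in> S")
          case True
          have "G n (k-1) * x k + G n (k+1) * x k + of_int (v k) * (G n k * x k)
             = (G (k+1) n + G (k-1) n + of_int (v k) * G k n) * x k"
            using Gs[of n "k-1"] Gs[of n "k+1"] Gs[of n k] by (simp add: algebra_simps)
          also have "\<dots> = (if k = n then 1 else 0) * x k" using Geq[OF True nS] by simp
          finally show ?thesis by auto
        next
          case False
          then have "k \<noteq> n" using nS by auto
          then show ?thesis using lp_supp[OF x False] by simp
        qed
      qed
      also have "\<dots> = x n" by (rule infsum_delta)
      finally show ?thesis .
    qed
  qed
  show ?thesis
    unfolding lp_invertible_def
    apply (rule exI[of _ B])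
    using into BA AB lin by blast
qed

definition restr :: "(int \<Rightarrow> int) \<Rightarrow> int set \<Rightarrow> ((int \<Rightarrow> complex) \<Rightarrow> (int \<Rightarrow> complex)) \<Rightarrow> bool" where
  "restr v S A \<longleftrightarrow> (\<forall>x. (\<forall>n. n \<notin> S \<longrightarrow> x n = 0) \<longrightarrow>
      A x = (\<lambda>n. if n \<in> S then x (n+1) + x (n-1) + of_int (v n) * x n else 0))"

lemma restr_H: "restr v UNIV (H_op v)"
  by (simp add: restr_def H_op_def)

lemma restr_plus: "restr v {0..} (H_plus v)"
  unfolding restr_def H_plus_def
proof (intro allI impI ext)
  fix x :: "int \<Rightarrow> complex" and n assume h: "\<forall>n. n \<notin> {0..} \<longrightarrow> x n = 0"
  show "(if 0 \<le> n then (if 0 \<le> n + 1 then x (n + 1) else 0) + (if 0 \<le> n - 1 then x (n - 1) else 0) + of_int (v n) * x n else 0) =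
        (if n \<in> {0..} then x (n + 1) + x (n - 1) + of_int (v n) * x n else 0)"
    using h[rule_format, of "n-1"] h[rule_format, of "n+1"] by auto
qed

lemma restr_minus: "restr v {..0} (H_minus v)"
  unfolding restr_def H_minus_def
proof (intro allI impI ext)
  fix x :: "int \<Rightarrow> complex" and n assume h: "\<forall>n. n \<notin> {..0} \<longrightarrow> x n = 0"
  show "(if n \<le> 0 then (if n + 1 \<le> 0 then x (n + 1) else 0) + (if n - 1 \<le> 0 then x (n - 1) else 0) + of_int (v n) * x n else 0) =
        (if n \<in> {..0} then x (n + 1) + x (n - 1) + of_int (v n) * x n else 0)"
    using h[rule_format, of "n-1"] h[rule_format, of "n+1"] by auto
qed

lemma inv_bound:
  assumes "lp_invertible p S A"
  shows "\<exists>C. \<forall>x. x \<in> lp_space p S \<longrightarrow> A x \<in> lp_space p S \<longrightarrow> lp_norm p x \<le> C * lp_norm p (A x)"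
proof -
  obtain B C where h: "\<forall>x\<in>lp_space p S. B (A x) = x" "\<forall>x\<in>lp_space p S. lp_norm p (B x) \<le> C * lp_norm p x"
    using assms unfolding lp_invertible_def by blast
  show ?thesis by (rule exI[of _ C]) (metis h)
qed

lemma per_mod:
  fixes f :: "int \<Rightarrow> 'a" and K :: int
  assumes K: "K > 0" and f: "\<And>n. f (n + K) = f n"
  shows "f n = f (n mod K)"
  by (rule per_induct[OF K, where P="\<lambda>n. f n = f (n mod K)"]) (use f in simp_all)

lemma per_mult:
  fixes f :: "int \<Rightarrow> 'a" and K :: int
  assumes K: "K > 0" and f: "\<And>n. f (n + K) = f n"
  shows "f (n + K * j) = f n"
proof -
  have f': "\<And>n. f (n + K) = f n" by (rule f)
  have "f (n + K * j) = f ((n + K * j) mod K)" by (rule per_mod[where f=f, OF K f'])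
  also have "\<dots> = f (n mod K)" by simp
  also have "\<dots> = f n" by (rule per_mod[where f=f, OF K f', symmetric])
  finally show ?thesis .
qed

lemma int_window: "{a..<a + int N} = (\<lambda>i. a + int i) ` {..<N}"
proof safe
  fix n assume "n \<in> {a..<a + int N}"
  then have "n = a + int (nat (n - a))" "nat (n - a) < N" by auto
  then show "n \<in> (\<lambda>i. a + int i) ` {..<N}" by blast
qed auto

lemma clamp_lip: "\<bar>max 0 (min 1 a) - max 0 (min 1 b)\<bar> \<le> \<bar>a - b\<bar>" for a b :: real
  by (simp add: max_def min_def abs_if)

lemma finsupp_infsum:
  fixes f :: "int \<Rightarrow> real"
  assumes "finite F" "\<And>n. n \<notin> F \<Longrightarrow> f n = 0"
  shows "f summable_on UNIV" "infsum f UNIV = sum f F"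
proof -
  show "f summable_on UNIV"
    using summable_on_cong_neutral[of F UNIV f f] assms by auto
  have "infsum f UNIV = infsum f F" by (rule infsum_cong_neutral) (use assms in auto)
  then show "infsum f UNIV = sum f F" using assms by simp
qed

locale ni = per +
  fixes \<phi> :: "int \<Rightarrow> complex"
  assumes s\<phi>: "is_sol v \<phi>" and nz: "\<exists>n. \<phi> n \<noteq> 0" and p\<phi>: "\<And>n. cmod (\<phi> (n + int K)) = cmod (\<phi> n)"
begin

lemma Kp: "int K > 0" using K1 by simp

lemma absper: "cmod (\<phi> (n + int K * j)) = cmod (\<phi> n)"
  by (rule per_mult[OF Kp, where f="\<lambda>n. cmod (\<phi> n)"]) (rule p\<phi>)

lemma Phi: "\<exists>\<Phi>. \<forall>n. cmod (\<phi> n) \<le> \<Phi>"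
proof -
  have "cmod (\<phi> n) \<le> Max ((\<lambda>n. cmod (\<phi> n)) ` {0..<int K})" for n
  proof -
    have "cmod (\<phi> n) = cmod (\<phi> (n mod int K))" by (rule per_mod[OF Kp, where f="\<lambda>n. cmod (\<phi> n)"]) (rule p\<phi>)
    also have "\<dots> \<le> Max ((\<lambda>n. cmod (\<phi> n)) ` {0..<int K})" by (rule Max_ge) (use Kp in auto)
    finally show ?thesis .
  qed
  then show ?thesis by blast
qed

lemma Vb: "\<exists>V. \<forall>n. \<bar>v n\<bar> \<le> V"
proof -
  have "\<bar>v n\<bar> \<le> Max ((\<lambda>n. \<bar>v n\<bar>) ` {0..<int K})" for n
  proof -
    have "\<bar>v n\<bar> = \<bar>v (n mod int K)\<bar>" by (rule per_mod[OF Kp, where f="\<lambda>n. \<bar>v n\<bar>"]) (simp add: pv)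
    also have "\<dots> \<le> Max ((\<lambda>n. \<bar>v n\<bar>) ` {0..<int K})" by (rule Max_ge) (use Kp in auto)
    finally show ?thesis .
  qed
  then show ?thesis by blast
qed

lemma r0: "\<exists>r0. 0 \<le> r0 \<and> r0 < int K \<and> \<phi> r0 \<noteq> 0"
proof -
  obtain n0 where "\<phi> n0 \<noteq> 0" using nz by blast
  moreover have "cmod (\<phi> n0) = cmod (\<phi> (n0 mod int K))" by (rule per_mod[OF Kp, where f="\<lambda>n. cmod (\<phi> n)"]) (rule p\<phi>)
  ultimately show ?thesis using Kp by (intro exI[of _ "n0 mod int K"]) auto
qed

lemma Hx_bound:
  fixes x :: "int \<Rightarrow> complex"
  assumes "\<And>m. cmod (x m) \<le> \<Phi>" "\<bar>v n\<bar> \<le> V"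
  shows "cmod (x (n+1) + x (n-1) + of_int (v n) * x n) \<le> (2 + real_of_int V) * \<Phi>"
proof -
  have "cmod (x (n+1) + x (n-1) + of_int (v n) * x n) \<le> cmod (x (n+1)) + cmod (x (n-1)) + \<bar>real_of_int (v n)\<bar> * cmod (x n)"
    by (metis norm_mult norm_of_int norm_triangle_le add_mono order_refl)
  also have "\<dots> \<le> \<Phi> + \<Phi> + real_of_int V * \<Phi>"
  proof (intro add_mono mult_mono assms(1))
    show "\<bar>real_of_int (v n)\<bar> \<le> real_of_int V" by (metis of_int_abs of_int_le_iff assms(2))
    show "0 \<le> real_of_int V" using assms(2) by simp
  qed simp
  finally show ?thesis by (simp add: algebra_simps)
qed

end

context ni begin

lemma ni_inf:
  fixes \<sigma> :: int
  assumes R: "restr v S A" and sig: "\<sigma> = 1 \<or> \<sigma> = -1" and S\<sigma>: "\<And>n. \<sigma> * n > 0 \<Longrightarrow> n \<in> S"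
  shows "\<not> lp_invertible \<infinity> S A"
proof
  assume "lp_invertible \<infinity> S A"
  then obtain C where Cb: "\<And>x. x \<in> lp_space \<infinity> S \<Longrightarrow> A x \<in> lp_space \<infinity> S \<Longrightarrow> lp_norm \<infinity> x \<le> C * lp_norm \<infinity> (A x)"
    using inv_bound by blast
  obtain \<Phi> where \<Phi>: "\<And>n. cmod (\<phi> n) \<le> \<Phi>" using Phi by blast
  obtain r0 where r0: "0 \<le> r0" "r0 < int K" "\<phi> r0 \<noteq> 0" using r0 by blast
  define c0 where "c0 = cmod (\<phi> r0)"
  have c0: "c0 > 0" using r0 by (simp add: c0_def)
  have \<Phi>0: "\<Phi> \<ge> 0" using \<Phi>[of 0] norm_ge_zero order_trans by blast
  define D where "D = max C 0 * (2 * \<Phi>)"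
  have D0: "D \<ge> 0" using \<Phi>0 by (simp add: D_def)
  have key: "c0 \<le> D / N" if N: "N > 0" for N :: real
  proof -
    define \<rho> where "\<rho> n = max 0 (min 1 (real_of_int (\<sigma> * n) / N))" for n
    define x where "x n = complex_of_real (\<rho> n) * \<phi> n" for n
    have \<rho>01: "0 \<le> \<rho> n" "\<rho> n \<le> 1" for n by (simp_all add: \<rho>_def)
    have \<rho>lip: "\<bar>\<rho> (n + d) - \<rho> n\<bar> \<le> 1 / N" if "d = 1 \<or> d = -1" for n d
    proof -
      have "\<bar>\<rho> (n + d) - \<rho> n\<bar> \<le> \<bar>real_of_int (\<sigma> * (n + d)) / N - real_of_int (\<sigma> * n) / N\<bar>"
        unfolding \<rho>_def by (rule clamp_lip)
      also have "\<dots> = \<bar>real_of_int (\<sigma> * d)\<bar> / N" using N by (simp add: algebra_simps diff_divide_distrib[symmetric])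
      also have "\<dots> = 1 / N" using sig that by auto
      finally show ?thesis .
    qed
    have xb: "cmod (x n) \<le> \<Phi>" for n
    proof -
      have "cmod (x n) = \<rho> n * cmod (\<phi> n)" using \<rho>01[of n] by (simp add: x_def norm_mult)
      also have "\<dots> \<le> 1 * \<Phi>" by (rule mult_mono) (use \<rho>01 \<Phi> in auto)
      finally show ?thesis by simp
    qed
    have xs: "\<forall>n. n \<notin> S \<longrightarrow> x n = 0"
    proof (intro allI impI)
      fix n assume "n \<notin> S"
      then have "\<sigma> * n \<le> 0" using S\<sigma> by force
      then have "real_of_int (\<sigma> * n) \<le> 0" by linarith
      then have "real_of_int (\<sigma> * n) / N \<le> 0" using N by (rule divide_nonpos_pos)
      then show "x n = 0" by (simp add: x_def \<rho>_def)
    qed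
    have xl: "x \<in> lp_space \<infinity> S"
      unfolding lp_space_def using xs xb by (auto simp: bounded_iff)
    have Ax: "A x = (\<lambda>n. if n \<in> S then x (n+1) + x (n-1) + of_int (v n) * x n else 0)"
      using R xs by (simp add: restr_def)
    have Axb: "cmod (A x n) \<le> 2 * \<Phi> / N" for n
    proof (cases "n \<in> S")
      case False then show ?thesis using Ax \<Phi>0 N by simp
    next
      case True
      have "x (n+1) + x (n-1) + of_int (v n) * x n
          = of_real (\<rho> (n+1) - \<rho> n) * \<phi> (n+1) + of_real (\<rho> (n-1) - \<rho> n) * \<phi> (n-1)
            + of_real (\<rho> n) * (\<phi> (n+1) + \<phi> (n-1) + of_int (v n) * \<phi> n)"
        by (simp add: x_def algebra_simps)
      also have "\<phi> (n+1) + \<phi> (n-1) + of_int (v n) * \<phi> n = 0" using s\<phi> by (simp add: is_sol_def)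
      finally have e: "x (n+1) + x (n-1) + of_int (v n) * x n
          = of_real (\<rho> (n+1) - \<rho> n) * \<phi> (n+1) + of_real (\<rho> (n-1) - \<rho> n) * \<phi> (n-1)" by simp
      have "cmod (of_real (\<rho> (n+1) - \<rho> n) * \<phi> (n+1) + of_real (\<rho> (n-1) - \<rho> n) * \<phi> (n-1))
          \<le> \<bar>\<rho> (n+1) - \<rho> n\<bar> * cmod (\<phi> (n+1)) + \<bar>\<rho> (n-1) - \<rho> n\<bar> * cmod (\<phi> (n-1))"
        using norm_triangle_ineq[of "of_real (\<rho> (n+1) - \<rho> n) * \<phi> (n+1)" "of_real (\<rho> (n-1) - \<rho> n) * \<phi> (n-1)"]
        by (simp only: norm_mult norm_of_real)
      also have "\<dots> \<le> (1/N) * \<Phi> + (1/N) * \<Phi>"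
        using \<rho>lip[of 1 n] \<rho>lip[of "-1" n] \<Phi>[of "n+1"] \<Phi>[of "n-1"] N
        by (intro add_mono mult_mono) (auto simp: algebra_simps)
      finally have f: "cmod (of_real (\<rho> (n+1) - \<rho> n) * \<phi> (n+1) + of_real (\<rho> (n-1) - \<rho> n) * \<phi> (n-1)) \<le> (1/N) * \<Phi> + (1/N) * \<Phi>" .
      have "A x n = x (n+1) + x (n-1) + of_int (v n) * x n" using True Ax by simp
      then have "cmod (A x n) \<le> (1/N) * \<Phi> + (1/N) * \<Phi>" unfolding e using f by simp
      also have "(1/N) * \<Phi> + (1/N) * \<Phi> = 2 * \<Phi> / N" by simp
      finally show ?thesis .
    qed
    have "bounded (range (A x))" unfolding bounded_iff using Axb by blast
    then have Al: "A x \<in> lp_space \<infinity> S"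
      unfolding lp_space_def using Ax by simp
    have nA: "lp_norm \<infinity> (A x) \<le> 2 * \<Phi> / N"
      unfolding lp_norm_def using Axb by (simp add: cSUP_least)
    define j where "j = nat \<lceil>N\<rceil> + 1"
    define n1 where "n1 = r0 + int K * (\<sigma> * int j)"
    have ss: "\<sigma> * \<sigma> = 1" using sig by auto
    have "\<sigma> * n1 = \<sigma> * r0 + int K * int j" by (simp add: n1_def algebra_simps ss)
    moreover have "\<sigma> * r0 \<ge> - int K" using sig r0 by auto
    moreover have "int K * int j \<ge> int K + int K * \<lceil>N\<rceil>" using N K1 by (simp add: j_def algebra_simps)
    moreover have "int K * \<lceil>N\<rceil> \<ge> 1 * \<lceil>N\<rceil>"
      by (rule mult_right_mono) (use N K1 in auto)
    ultimately have "real_of_int (\<sigma> * n1) \<ge> N" by linarith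
    then have "\<rho> n1 = 1" using N by (simp add: \<rho>_def)
    then have "cmod (x n1) = c0" unfolding x_def c0_def n1_def using absper by simp
    then have "c0 \<le> lp_norm \<infinity> x" using lp_inf_norm[OF xl, of n1] by simp
    also have "\<dots> \<le> C * lp_norm \<infinity> (A x)" by (rule Cb[OF xl Al])
    also have "\<dots> \<le> max C 0 * lp_norm \<infinity> (A x)"
      by (rule mult_right_mono) (use order_trans[OF norm_ge_zero lp_inf_norm[OF Al]] in auto)
    also have "\<dots> \<le> max C 0 * (2 * \<Phi> / N)" by (rule mult_left_mono[OF nA]) simp
    finally show ?thesis by (simp add: D_def)
  qed
  have "c0 \<le> D / (2 * D / c0 + 1)" by (rule key) (use D0 c0 in \<open>auto intro: add_nonneg_pos\<close>)
  moreover have "D / (2 * D / c0 + 1) < c0"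
  proof -
    have pos: "2 * D / c0 + 1 > 0" using D0 c0 by (auto intro: add_nonneg_pos)
    have "D < c0 * (2 * D / c0 + 1)" using D0 c0 by (simp add: algebra_simps)
    then show ?thesis using pos by (simp add: divide_less_eq mult.commute)
  qed
  ultimately show False by simp
qed

end

context ni begin

lemma ni_fin:
  assumes p: "1 \<le> p" "p \<noteq> \<infinity>" and R: "restr v S A"
    and WS: "\<And>j::nat. \<exists>a. \<forall>n. a \<le> n \<and> n < a + int j * int K \<longrightarrow> n \<in> S"
  shows "\<not> lp_invertible p S A"
proof
  assume "lp_invertible p S A"
  then obtain C where Cb: "\<And>x. x \<in> lp_space p S \<Longrightarrow> A x \<in> lp_space p S \<Longrightarrow> lp_norm p x \<le> C * lp_norm p (A x)"
    using inv_bound by blast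
  obtain \<Phi> where \<Phi>: "\<And>n. cmod (\<phi> n) \<le> \<Phi>" using Phi by blast
  obtain V where V: "\<And>n. \<bar>v n\<bar> \<le> V" using Vb by blast
  obtain r0 where r0: "0 \<le> r0" "r0 < int K" "\<phi> r0 \<noteq> 0" using r0 by blast
  define r where "r = real_of_ereal p"
  have r1: "r \<ge> 1" using p_real[OF p] by (simp add: r_def)
  have pr: "p = ereal r" using p_real[OF p] by (simp add: r_def)
  define \<rho> where "\<rho> = cmod (\<phi> r0) powr r"
  have \<rho>: "\<rho> > 0" using r0 by (simp add: \<rho>_def)
  have \<Phi>0: "\<Phi> \<ge> 0" using \<Phi>[of 0] norm_ge_zero order_trans by blast
  have V0: "V \<ge> 0" using V[of 0] by simp
  define M where "M = (2 + real_of_int V) * \<Phi>"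
  have M0: "M \<ge> 0" using \<Phi>0 V0 by (simp add: M_def)
  define D where "D = max C 0 * (4 * M powr r) powr (1/r)"
  have D0: "D \<ge> 0" by (simp add: D_def)
  have key: "(real j * \<rho>) powr (1/r) \<le> D" for j :: nat
  proof -
    obtain a where a: "\<And>n. a \<le> n \<Longrightarrow> n < a + int j * int K \<Longrightarrow> n \<in> S" using WS[of j] by blast
    define N where "N = j * K"
    define b where "b = a + int N"
    define x where "x n = (if a \<le> n \<and> n < b then \<phi> n else 0)" for n
    have xs: "\<forall>n. n \<notin> S \<longrightarrow> x n = 0" using a by (auto simp: x_def b_def N_def)
    have xb: "cmod (x n) \<le> \<Phi>" for n using \<Phi>[of n] \<Phi>0 by (simp add: x_def)
    have fx: "finite {a..<b}" by simp
    have xz: "\<And>n. n \<notin> {a..<b} \<Longrightarrow> cmod (x n) powr r = 0" by (auto simp: x_def)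
    have xl: "x \<in> lp_space p S"
      unfolding lp_space_def using xs finsupp_infsum(1)[OF fx xz] p(2) by (simp add: r_def)
    have nx: "lp_norm p x = (\<Sum>n\<in>{a..<b}. cmod (\<phi> n) powr r) powr (1/r)"
      unfolding lp_norm_def using p(2) finsupp_infsum(2)[OF fx xz] by (simp add: r_def x_def)
    define g where "g i = cmod (\<phi> (a + int i)) powr r" for i
    have "(\<Sum>n\<in>{a..<b}. cmod (\<phi> n) powr r) = (\<Sum>i<N. g i)"
      unfolding b_def int_window by (subst sum.reindex) (auto simp: inj_on_def g_def)
    define i0 where "i0 = nat ((r0 - a) mod int K)"
    have i0: "i0 < K" using Kp by (simp add: i0_def nat_less_iff)
    define idx where "idx m = m * K + i0" for m
    have gidx: "g (idx m) = \<rho>" for m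
    proof -
      have m0: "(r0 - a) mod int K \<ge> 0" using Kp by simp
      have ii: "int i0 = (r0 - a) - int K * ((r0 - a) div int K)"
        using m0 by (simp add: i0_def minus_mult_div_eq_mod)
      have "a + int (idx m) = a + int m * int K + int i0" by (simp add: idx_def)
      also have "\<dots> = r0 + int K * (int m - (r0 - a) div int K)" unfolding ii by (simp add: algebra_simps)
      finally have "a + int (idx m) = r0 + int K * (int m - (r0 - a) div int K)" .
      then show ?thesis unfolding g_def \<rho>_def using absper by simp
    qed
    have "real j * \<rho> = (\<Sum>m<j. g (idx m))" using gidx by simp
    also have "\<dots> = (\<Sum>i\<in>idx ` {..<j}. g i)"
      by (subst sum.reindex) (use K1 in \<open>auto simp: inj_on_def idx_def\<close>)
    also have "\<dots> \<le> (\<Sum>i<N. g i)"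
    proof (rule sum_mono2)
      show "idx ` {..<j} \<subseteq> {..<N}"
      proof
        fix i assume "i \<in> idx ` {..<j}"
        then obtain m where m: "m < j" "i = m * K + i0" by (auto simp: idx_def)
        have "m * K + i0 < m * K + K" using i0 by simp
        also have "\<dots> = (m + 1) * K" by simp
        also have "\<dots> \<le> j * K" using m(1) by (intro mult_right_mono) auto
        finally show "i \<in> {..<N}" using m by (simp add: N_def)
      qed
    qed (auto simp: g_def)
    finally have lb: "real j * \<rho> \<le> (\<Sum>n\<in>{a..<b}. cmod (\<phi> n) powr r)"
      using \<open>(\<Sum>n\<in>{a..<b}. cmod (\<phi> n) powr r) = (\<Sum>i<N. g i)\<close> by simp
    have Ax: "A x = (\<lambda>n. if n \<in> S then x (n+1) + x (n-1) + of_int (v n) * x n else 0)"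
      using R xs by (simp add: restr_def)
    define F4 where "F4 = {a-1, a, b-1, b}"
    have Az: "A x n = 0" if nF: "n \<notin> F4" for n
    proof (cases "n \<in> S")
      case False then show ?thesis using Ax by simp
    next
      case True
      consider "n < a - 1" | "n > b" | "a < n \<and> n < b - 1" using nF unfolding F4_def by force
      then show ?thesis
      proof cases
        case 1 then show ?thesis using Ax by (simp add: x_def)
      next
        case 2 then show ?thesis using Ax by (simp add: x_def)
      next
        case 3
        then have "x (n+1) + x (n-1) + of_int (v n) * x n = \<phi> (n+1) + \<phi> (n-1) + of_int (v n) * \<phi> n"
          by (simp add: x_def)
        also have "\<dots> = 0" using s\<phi> by (simp add: is_sol_def)
        finally show ?thesis using Ax True by simp
      qed
    qed
    have Ab: "cmod (A x n) \<le> M" for n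
    proof (cases "n \<in> S")
      case False then show ?thesis using Ax M0 by simp
    next
      case True then show ?thesis using Ax Hx_bound[OF xb V] by (simp add: M_def)
    qed
    have f4: "finite F4" by (simp add: F4_def)
    have Az': "\<And>n. n \<notin> F4 \<Longrightarrow> cmod (A x n) powr r = 0" using Az by simp
    have Al: "A x \<in> lp_space p S"
      unfolding lp_space_def using Ax finsupp_infsum(1)[OF f4 Az'] p(2) by (simp add: r_def)
    have "lp_norm p (A x) = (\<Sum>n\<in>F4. cmod (A x n) powr r) powr (1/r)"
      unfolding lp_norm_def using p(2) finsupp_infsum(2)[OF f4 Az'] by (simp add: r_def)
    also have "\<dots> \<le> (4 * M powr r) powr (1/r)"
    proof (rule powr_mono2)
      have "(\<Sum>n\<in>F4. cmod (A x n) powr r) \<le> (\<Sum>n\<in>F4. M powr r)"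
        by (rule sum_mono, rule powr_mono2) (use r1 Ab in auto)
      also have "\<dots> = real (card F4) * M powr r" by simp
      also have "\<dots> \<le> 4 * M powr r"
      proof (rule mult_right_mono)
        have "card F4 \<le> 4" unfolding F4_def
          using card_length[of "[a-1, a, b-1, b]"] by simp
        then show "real (card F4) \<le> 4" by simp
      qed simp
      finally show "(\<Sum>n\<in>F4. cmod (A x n) powr r) \<le> 4 * M powr r" .
    qed (use r1 in \<open>auto intro: sum_nonneg\<close>)
    finally have nA: "lp_norm p (A x) \<le> (4 * M powr r) powr (1/r)" .
    have nA0: "lp_norm p (A x) \<ge> 0" unfolding lp_norm_def using p(2) by simp
    have "(real j * \<rho>) powr (1/r) \<le> lp_norm p x"
      unfolding nx by (rule powr_mono2) (use lb r1 \<rho> in auto)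
    also have "\<dots> \<le> C * lp_norm p (A x)" by (rule Cb[OF xl Al])
    also have "\<dots> \<le> max C 0 * lp_norm p (A x)" by (rule mult_right_mono) (use nA0 in auto)
    also have "\<dots> \<le> D" unfolding D_def by (rule mult_left_mono[OF nA]) simp
    finally show ?thesis .
  qed
  define j where "j = nat \<lceil>D powr r / \<rho>\<rceil> + 1"
  have "D powr r < real j * \<rho>"
  proof -
    have "D powr r / \<rho> < real j" unfolding j_def by linarith
    then show ?thesis using \<rho> by (simp add: divide_less_eq)
  qed
  then have "(D powr r) powr (1/r) < (real j * \<rho>) powr (1/r)"
    by (rule powr_less_mono2[rotated 2]) (use r1 in auto)
  moreover have "(D powr r) powr (1/r) = D" using r1 D0 by (simp add: powr_powr)
  ultimately show False using key[of j] by simp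
qed

end

lemma sol_ints:
  assumes s: "is_sol v u" and z: "u k \<in> \<int>" "u (k+1) \<in> \<int>"
  shows "u n \<in> \<int>"
proof -
  have f: "u (k + int i) \<in> \<int> \<and> u (k + int i + 1) \<in> \<int>" for i
  proof (induction i)
    case 0 then show ?case using z by simp
  next
    case (Suc i)
    have "u (k + int i + 1 + 1) = - u (k + int i + 1 - 1) - of_int (v (k + int i + 1)) * u (k + int i + 1)"
      using is_solD[OF s] by blast
    then have A: "u (k + int i + 1 + 1) \<in> \<int>" using Suc by (simp add: Ints_diff Ints_mult Ints_minus)
    have e1: "k + int (Suc i) = k + int i + 1" and e2: "k + int (Suc i) + 1 = k + int i + 1 + 1" by simp_all
    show ?case unfolding e1 e2 using A Suc.IH by blast
  qed
  have b: "u (k - int i) \<in> \<int> \<and> u (k - int i + 1) \<in> \<int>" for i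
  proof (induction i)
    case 0 then show ?case using z by simp
  next
    case (Suc i)
    have "u (k - int i - 1) = - u (k - int i + 1) - of_int (v (k - int i)) * u (k - int i)"
      using is_solD'[OF s] by blast
    then have A: "u (k - int i - 1) \<in> \<int>" using Suc by (simp add: Ints_diff Ints_mult Ints_minus)
    have e1: "k - int (Suc i) = k - int i - 1" and e2: "k - int (Suc i) + 1 = k - int i" by simp_all
    show ?case unfolding e2 unfolding e1 using A Suc.IH by blast
  qed
  show ?thesis
  proof (cases "n \<ge> k")
    case True
    then have "n = k + int (nat (n - k))" by simp
    then show ?thesis using f by metis
  next
    case False
    then have "n = k - int (nat (k - n))" by simp
    then show ?thesis using b by metis
  qed
qed

lemma Ints_small: "(z::complex) \<in> \<int> \<Longrightarrow> cmod z < 1 \<Longrightarrow> z = 0"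
  by (elim Ints_cases) auto

lemma mult_iter:
  fixes \<phi> :: "int \<Rightarrow> complex"
  assumes "\<And>n. \<phi> (n + d) = \<kappa> * \<phi> n"
  shows "\<phi> (n + int j * d) = \<kappa> ^ j * \<phi> n"
proof (induction j)
  case (Suc j)
  have "\<phi> (n + int (Suc j) * d) = \<phi> ((n + int j * d) + d)" by (simp add: algebra_simps)
  also have "\<dots> = \<kappa> * \<phi> (n + int j * d)" by (rule assms)
  finally show ?case using Suc by (simp add: mult.assoc)
qed simp

lemma decay_int:
  assumes s: "is_sol v u" and ui: "\<And>n. u n \<in> \<int>" and uc: "\<And>n. u n = c * \<phi> n"
    and ph: "\<And>n. \<phi> (n + d) = \<kappa> * \<phi> n" and \<kappa>: "cmod \<kappa> < 1"
  shows "u n = 0"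
proof -
  define M0 where "M0 = cmod c * (cmod (\<phi> 0) + cmod (\<phi> (-1))) + 1"
  have M0: "M0 > 0" by (simp add: M0_def add_nonneg_pos)
  obtain j where j: "cmod \<kappa> ^ j < 1 / M0" using real_arch_pow_inv[of "1/M0" "cmod \<kappa>"] M0 \<kappa> by auto
  have small: "u (int j * d + e) = 0" if e: "e = 0 \<or> e = -1" for e
  proof (rule Ints_small[OF ui])
    have "u (int j * d + e) = c * (\<kappa> ^ j * \<phi> e)"
      using uc mult_iter[of \<phi> d \<kappa> e j, OF ph] by (simp add: add.commute)
    then have "cmod (u (int j * d + e)) = cmod c * (cmod \<kappa> ^ j * cmod (\<phi> e))"
      by (simp add: norm_mult norm_power)
    also have "\<dots> \<le> cmod \<kappa> ^ j * M0"
    proof -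
      have "cmod (\<phi> e) \<le> cmod (\<phi> 0) + cmod (\<phi> (-1))" using e by auto
      then have "cmod c * cmod (\<phi> e) \<le> M0" unfolding M0_def
        by (metis add_increasing2 mult_left_mono norm_ge_zero zero_le_one)
      then have "(cmod c * cmod (\<phi> e)) * cmod \<kappa> ^ j \<le> M0 * cmod \<kappa> ^ j" by (rule mult_right_mono) simp
      then show ?thesis by (simp add: mult_ac)
    qed
    also have "\<dots> < 1" using j M0 by (simp add: pos_less_divide_eq)
    finally show "cmod (u (int j * d + e)) < 1" .
  qed
  show ?thesis
    by (rule sol_zero[OF s, where k="int j * d - 1"]) (use small[of "-1"] small[of 0] in simp_all)
qed

lemma growth:
  fixes K :: int and \<Lambda> :: real
  assumes K: "K > 0" and L: "\<Lambda> > 0" and ph: "\<And>n. cmod (\<phi> (n + K)) = \<Lambda> * cmod (\<phi> n)"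
  shows "\<exists>A\<ge>0. \<forall>n. cmod (\<phi> n) \<le> A * \<Lambda> powr (real_of_int n / real_of_int K)"
proof -
  define A where "A = Max ((\<lambda>n. cmod (\<phi> n) / \<Lambda> powr (real_of_int n / real_of_int K)) ` {0..<K})"
  have A0: "A \<ge> 0"
  proof -
    have "cmod (\<phi> 0) / \<Lambda> powr (real_of_int 0 / real_of_int K) \<le> A"
      unfolding A_def by (rule Max_ge) (use K in \<open>auto intro: rev_image_eqI[of 0]\<close>)
    moreover have "cmod (\<phi> 0) / \<Lambda> powr (real_of_int 0 / real_of_int K) \<ge> 0" by simp
    ultimately show ?thesis by linarith
  qed
  have "cmod (\<phi> n) \<le> A * \<Lambda> powr (real_of_int n / real_of_int K)" for n
  proof (rule per_induct[OF K, where P="\<lambda>n. cmod (\<phi> n) \<le> A * \<Lambda> powr (real_of_int n / real_of_int K)"])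
    fix n
    have e: "\<Lambda> powr (real_of_int (n + K) / real_of_int K) = \<Lambda> * \<Lambda> powr (real_of_int n / real_of_int K)"
    proof -
      have "real_of_int (n + K) / real_of_int K = real_of_int n / real_of_int K + 1" using K by (simp add: field_simps)
      then show ?thesis using L by (simp add: powr_add)
    qed
    show "(cmod (\<phi> n) \<le> A * \<Lambda> powr (real_of_int n / real_of_int K)) =
          (cmod (\<phi> (n + K)) \<le> A * \<Lambda> powr (real_of_int (n + K) / real_of_int K))"
      unfolding ph e using L by (simp add: mult.left_commute)
  next
    fix n assume n: "0 \<le> n" "n < K"
    have "cmod (\<phi> n) / \<Lambda> powr (real_of_int n / real_of_int K) \<le> A"
      unfolding A_def by (rule Max_ge) (use n in auto)
    then show "cmod (\<phi> n) \<le> A * \<Lambda> powr (real_of_int n / real_of_int K)"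
      using L by (simp add: divide_le_eq)
  qed
  then show ?thesis using A0 by blast
qed

lemma kernel_from_sols:
  fixes \<alpha> \<beta> :: "int \<Rightarrow> complex" and \<Lambda> :: real and K :: int and p :: ereal and V :: int
  assumes p: "1 \<le> p" and sa: "is_sol v \<alpha>" and sb: "is_sol v \<beta>" and W: "wr \<alpha> \<beta> 0 \<noteq> 0"
    and L: "\<Lambda> > 1" and K: "K > 0"
    and ab: "\<And>n. n \<in> S \<Longrightarrow> cmod (\<alpha> n) \<le> Aa * \<Lambda> powr (real_of_int n / real_of_int K)"
    and bb: "\<And>n. n \<in> S \<Longrightarrow> cmod (\<beta> n) \<le> Ab * \<Lambda> powr (- real_of_int n / real_of_int K)"
    and Aa: "Aa \<ge> 0" and Ab: "Ab \<ge> 0"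
    and bd1: "\<And>k m. k \<in> S \<Longrightarrow> m \<in> S \<Longrightarrow> k+1 \<notin> S \<Longrightarrow> green \<alpha> \<beta> (k+1) m = 0"
    and bd2: "\<And>k m. k \<in> S \<Longrightarrow> m \<in> S \<Longrightarrow> k-1 \<notin> S \<Longrightarrow> green \<alpha> \<beta> (k-1) m = 0"
    and vb: "\<And>n. \<bar>v n\<bar> \<le> V"
    and R: "restr v S A"
  shows "lp_invertible p S A"
proof -
  define G where "G n m = (if n \<in> S \<and> m \<in> S then green \<alpha> \<beta> n m else 0)" for n m
  define q where "q = \<Lambda> powr (-1 / real_of_int K)"
  have q0: "q > 0" using L by (simp add: q_def)
  have q1: "q < 1"
  proof -
    have "\<Lambda> powr (-1 / real_of_int K) < \<Lambda> powr 0" using L K by (subst powr_less_cancel_iff) (auto simp: divide_neg_pos)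
    then show ?thesis using L by (simp add: q_def)
  qed
  define C where "C = Aa * Ab / cmod (wr \<alpha> \<beta> 0) + 1"
  have C0: "C > 0" using Aa Ab by (simp add: C_def add_nonneg_pos)
  have qe: "\<Lambda> powr (real_of_int (min n m) / real_of_int K) * \<Lambda> powr (- real_of_int (max n m) / real_of_int K) = q ^ nat \<bar>n - m\<bar>" for n m
  proof -
    have "\<Lambda> powr (real_of_int (min n m) / real_of_int K) * \<Lambda> powr (- real_of_int (max n m) / real_of_int K)
        = \<Lambda> powr (real_of_int (min n m) / real_of_int K + - real_of_int (max n m) / real_of_int K)"
      by (rule powr_add[symmetric])
    also have "real_of_int (min n m) / real_of_int K + - real_of_int (max n m) / real_of_int K = -1 / real_of_int K * real (nat \<bar>n - m\<bar>)"
      using K by (simp add: field_simps min_def max_def abs_if)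
    also have "\<Lambda> powr (-1 / real_of_int K * real (nat \<bar>n - m\<bar>)) = q powr real (nat \<bar>n - m\<bar>)"
      by (simp add: q_def powr_powr)
    also have "\<dots> = q ^ nat \<bar>n - m\<bar>" using q0 by (rule powr_realpow)
    finally show ?thesis .
  qed
  show ?thesis
  proof (rule kernel_inv[OF p C0 less_imp_le[OF q0] q1, where G=G and v=v and V=V])
    fix n m
    show "cmod (G n m) \<le> C * q ^ nat \<bar>n - m\<bar>"
    proof (cases "n \<in> S \<and> m \<in> S")
      case True
      have mS: "min n m \<in> S" "max n m \<in> S" using True by (auto simp: min_def max_def)
      have "cmod (G n m) = cmod (\<alpha> (min n m)) * cmod (\<beta> (max n m)) / cmod (wr \<alpha> \<beta> 0)"
        using True by (simp add: G_def green_def norm_mult norm_divide)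
      also have "\<dots> \<le> (Aa * \<Lambda> powr (real_of_int (min n m) / real_of_int K)) * (Ab * \<Lambda> powr (- real_of_int (max n m) / real_of_int K)) / cmod (wr \<alpha> \<beta> 0)"
        by (intro divide_right_mono mult_mono ab bb mS) (use Aa in auto)
      also have "\<dots> = (Aa * Ab / cmod (wr \<alpha> \<beta> 0)) * q ^ nat \<bar>n - m\<bar>"
        using qe[of n m] by (simp add: field_simps)
      also have "\<dots> \<le> C * q ^ nat \<bar>n - m\<bar>"
        by (rule mult_right_mono) (use q0 in \<open>auto simp: C_def\<close>)
      finally show ?thesis .
    next
      case False then have "G n m = 0" unfolding G_def by auto
      then show ?thesis using C0 q0 by simp
    qed
  next
    fix n m show "G n m = G m n" by (auto simp: G_def green_sym)
  next
    fix n m assume "n \<notin> S" then show "G n m = 0" by (simp add: G_def)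
  next
    fix k m assume k: "k \<in> S" and m: "m \<in> S"
    have e1: "G (k+1) m = green \<alpha> \<beta> (k+1) m" using bd1[OF k m] m by (auto simp: G_def)
    have e2: "G (k-1) m = green \<alpha> \<beta> (k-1) m" using bd2[OF k m] m by (auto simp: G_def)
    have e3: "G k m = green \<alpha> \<beta> k m" using k m by (simp add: G_def)
    show "G (k+1) m + G (k-1) m + of_int (v k) * G k m = (if k = m then 1 else 0)"
      unfolding e1 e2 e3 by (rule green_eq[OF sa sb W])
  next
    fix n show "\<bar>v n\<bar> \<le> V" by (rule vb)
  next
    fix x :: "int \<Rightarrow> complex" assume "\<forall>n. n \<notin> S \<longrightarrow> x n = 0"
    then show "A x = (\<lambda>n. if n \<in> S then x (n+1) + x (n-1) + of_int (v n) * x n else 0)"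
      using R by (simp add: restr_def)
  qed
qed

context per begin

lemma Kp': "int K > 0" using K1 by simp

lemma Vbound: "\<exists>V. \<forall>n. \<bar>v n\<bar> \<le> V"
proof -
  have "\<bar>v n\<bar> \<le> Max ((\<lambda>n. \<bar>v n\<bar>) ` {0..<int K})" for n
  proof -
    have "\<bar>v n\<bar> = \<bar>v (n mod int K)\<bar>" by (rule per_mod[OF Kp', where f="\<lambda>n. \<bar>v n\<bar>"]) (simp add: pv)
    also have "\<dots> \<le> Max ((\<lambda>n. \<bar>v n\<bar>) ` {0..<int K})" by (rule Max_ge) (use Kp' in auto)
    finally show ?thesis .
  qed
  then show ?thesis by blast
qed

theorem noninv:
  assumes t: "\<bar>tr\<bar> \<le> 2" and p: "1 \<le> p"
  shows "\<not> lp_invertible p UNIV (H_op v)" "\<not> lp_invertible p {0..} (H_plus v)" "\<not> lp_invertible p {..0} (H_minus v)"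
proof -
  obtain \<mu> where \<mu>: "cmod \<mu> = 1" "\<mu>^2 - of_real tr * \<mu> + 1 = 0" using root_unit[OF t] by blast
  obtain \<phi> where \<phi>: "is_sol v \<phi>" "\<phi> 0 \<noteq> 0 \<or> \<phi> (-1) \<noteq> 0" "\<And>n. \<phi> (n + int K) = \<mu> * \<phi> n"
    using floquet[OF \<mu>(2)] by blast
  interpret N: ni v K \<phi>
  proof
    show "is_sol v \<phi>" by (rule \<phi>(1))
    show "\<exists>n. \<phi> n \<noteq> 0" using \<phi>(2) by blast
    fix n show "cmod (\<phi> (n + int K)) = cmod (\<phi> n)" using \<phi>(3)[of n] \<mu>(1) by (simp add: norm_mult)
  qed
  have "\<not> lp_invertible p UNIV (H_op v) \<and> \<not> lp_invertible p {0..} (H_plus v) \<and> \<not> lp_invertible p {..0} (H_minus v)"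
  proof (cases "p = \<infinity>")
    case True
    have a: "\<not> lp_invertible \<infinity> UNIV (H_op v)" by (rule N.ni_inf[OF restr_H, where \<sigma>=1]) auto
    have b: "\<not> lp_invertible \<infinity> {0..} (H_plus v)" by (rule N.ni_inf[OF restr_plus, where \<sigma>=1]) auto
    have c: "\<not> lp_invertible \<infinity> {..0} (H_minus v)" by (rule N.ni_inf[OF restr_minus, where \<sigma>="-1"]) auto
    show ?thesis using a b c True by simp
  next
    case False
    have a: "\<not> lp_invertible p UNIV (H_op v)" by (rule N.ni_fin[OF p False restr_H]) auto
    have b: "\<not> lp_invertible p {0..} (H_plus v)" by (rule N.ni_fin[OF p False restr_plus]) (use exI[of _ 0] in auto)
    have c: "\<not> lp_invertible p {..0} (H_minus v)"
    proof (rule N.ni_fin[OF p False restr_minus])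
      fix j :: nat
      show "\<exists>a. \<forall>n. a \<le> n \<and> n < a + int j * int K \<longrightarrow> n \<in> {..0}"
        by (rule exI[of _ "- (int j * int K)"]) auto
    qed
    show ?thesis using a b c by simp
  qed
  then show "\<not> lp_invertible p UNIV (H_op v)" "\<not> lp_invertible p {0..} (H_plus v)" "\<not> lp_invertible p {..0} (H_minus v)"
    by blast+
qed

end

lemma wr_swap: "wr a b n = - wr b a n"
  by (simp add: wr_def)

context per begin

theorem inv:
  assumes t: "\<bar>tr\<bar> > 2" and p: "1 \<le> p"
  shows "lp_invertible p UNIV (H_op v)" "lp_invertible p {0..} (H_plus v)" "lp_invertible p {..0} (H_minus v)"
proof -
  obtain l :: real where l: "\<bar>l\<bar> > 1" "l^2 - tr * l + 1 = 0" using root_hyp[OF t] by blast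
  define lc where "lc = complex_of_real l"
  have l0: "l \<noteq> 0" using l by auto
  have r1: "lc^2 - of_real tr * lc + 1 = 0"
  proof -
    have "complex_of_real (l^2 - tr * l + 1) = 0" using l by simp
    then show ?thesis by (simp add: lc_def)
  qed
  have r2: "(1/lc)^2 - of_real tr * (1/lc) + 1 = 0"
  proof -
    have "(1/lc)^2 - of_real tr * (1/lc) + 1 = (lc^2 - of_real tr * lc + 1) / lc^2"
      using l0 by (simp add: lc_def field_simps power2_eq_square)
    then show ?thesis using r1 by simp
  qed
  obtain \<phi>m where m: "is_sol v \<phi>m" "\<phi>m 0 \<noteq> 0 \<or> \<phi>m (-1) \<noteq> 0" "\<And>n. \<phi>m (n + int K) = lc * \<phi>m n"
    using floquet[OF r1] by blast
  obtain \<phi>p where pp: "is_sol v \<phi>p" "\<phi>p 0 \<noteq> 0 \<or> \<phi>p (-1) \<noteq> 0" "\<And>n. \<phi>p (n + int K) = (1/lc) * \<phi>p n"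
    using floquet[OF r2] by blast
  define \<Lambda> where "\<Lambda> = \<bar>l\<bar>"
  have L: "\<Lambda> > 1" using l by (simp add: \<Lambda>_def)
  obtain V where V: "\<And>n. \<bar>v n\<bar> \<le> V" using Vbound by blast
  have cl: "cmod lc = \<Lambda>" by (simp add: lc_def \<Lambda>_def)
  have gm: "\<And>n. cmod (\<phi>m (n + int K)) = \<Lambda> * cmod (\<phi>m n)" using m(3) cl by (simp add: norm_mult)
  have gp: "\<And>n. cmod (\<phi>p (n + int K)) = (1/\<Lambda>) * cmod (\<phi>p n)" using pp(3) cl by (simp add: norm_mult norm_divide)
  have L0: "\<Lambda> > 0" "1/\<Lambda> > 0" using L by simp_all
  obtain Am where Am: "Am \<ge> 0" "\<And>n. cmod (\<phi>m n) \<le> Am * \<Lambda> powr (real_of_int n / real_of_int (int K))"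
    using growth[where \<phi>=\<phi>m, OF Kp' L0(1) gm] by blast
  obtain Ap where Ap: "Ap \<ge> 0" "\<And>n. cmod (\<phi>p n) \<le> Ap * (1/\<Lambda>) powr (real_of_int n / real_of_int (int K))"
    using growth[where \<phi>=\<phi>p, OF Kp' L0(2) gp] by blast
  have inv\<Lambda>: "(1/\<Lambda>) powr x = \<Lambda> powr (- x)" for x using L by (simp add: powr_minus_divide powr_divide)
  have Ap': "\<And>n. cmod (\<phi>p n) \<le> Ap * \<Lambda> powr (- real_of_int n / real_of_int (int K))"
    using Ap(2) unfolding inv\<Lambda> by simp
  have W0: "wr \<phi>m \<phi>p 0 \<noteq> 0"
  proof
    assume w: "wr \<phi>m \<phi>p 0 = 0"
    then have "wr \<phi>m \<phi>p (-1) = 0" using wr_const[OF m(1) pp(1), of "-1"] by simp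
    then obtain c where c: "\<phi>m = (\<lambda>n. c * \<phi>p n)" using wr_dep[OF m(1) pp(1) _ pp(2)] by blast
    have cz: "c * (1/lc - lc) * \<phi>p n = 0" for n
    proof -
      have e1: "\<phi>m (n + int K) = c * (1/lc) * \<phi>p n" using pp(3)[of n] c by simp
      have e2: "\<phi>m (n + int K) = lc * (c * \<phi>p n)" using m(3)[of n] c by simp
      from e1 e2 have e: "c * (1/lc) * \<phi>p n = lc * (c * \<phi>p n)" by simp
      have "c * (1/lc - lc) * \<phi>p n = c * (1/lc) * \<phi>p n - c * lc * \<phi>p n"
        by (simp only: right_diff_distrib left_diff_distrib)
      also have "c * lc * \<phi>p n = lc * (c * \<phi>p n)" by (simp only: mult_ac)
      finally show ?thesis using e by simp
    qed
    have nz: "1/lc - lc \<noteq> 0"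
    proof -
      have ll: "1 < \<bar>l\<bar> * \<bar>l\<bar>" by (rule less_1_mult[OF l(1) l(1)])
      have "\<bar>l\<bar> * \<bar>l\<bar> = l * l" by (rule abs_mult_self_eq)
      then have "1 - l * l \<noteq> 0" using ll by linarith
      moreover have "1 / l - l = (1 - l * l) / l" using l0 by (simp add: diff_divide_distrib)
      ultimately have "1 / l - l \<noteq> 0" using l0 by simp
      moreover have "1/lc - lc = complex_of_real (1 / l - l)" by (simp add: lc_def)
      ultimately show ?thesis by (metis of_real_eq_0_iff)
    qed
    obtain n0 where n0: "\<phi>p n0 \<noteq> 0" using pp(2) by blast
    have "c * (1/lc - lc) = 0" using cz[of n0] n0 by simp
    then have "c = 0" using nz by simp
    then show False using m(2) c by simp
  qed
  have W1: "wr \<phi>m \<phi>p (-1) \<noteq> 0" using W0 wr_const[OF m(1) pp(1), of "-1"] by simp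
  define \<psi> where "\<psi> = mksol v 1 0"
  have s\<psi>: "is_sol v \<psi>" and \<psi>0: "\<psi> 0 = 1" "\<psi> (-1) = 0" by (simp_all add: \<psi>_def mksol_sol mksol_0 mksol_m1)
  have \<psi>i: "\<psi> n \<in> \<int>" for n by (rule sol_ints[OF s\<psi>, where k="-1"]) (use \<psi>0 in simp_all)
  define \<psi>' where "\<psi>' = mksol v 1 (- of_int (v 0))"
  have s\<psi>': "is_sol v \<psi>'" and \<psi>'0: "\<psi>' 0 = 1" "\<psi>' (-1) = - of_int (v 0)" by (simp_all add: \<psi>'_def mksol_sol mksol_0 mksol_m1)
  have \<psi>'1: "\<psi>' 1 = 0" using is_solD[OF s\<psi>', of 0] \<psi>'0 by simp
  have \<psi>'i: "\<psi>' n \<in> \<int>" for n by (rule sol_ints[OF s\<psi>', where k="-1"]) (use \<psi>'0 in simp_all)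
  have k1: "cmod (1/lc) < 1" using l by (simp add: lc_def norm_divide)
  have Wp: "wr \<psi> \<phi>p 0 \<noteq> 0"
  proof
    assume "wr \<psi> \<phi>p 0 = 0"
    then have "wr \<psi> \<phi>p (-1) = 0" using wr_const[OF s\<psi> pp(1), of "-1"] by simp
    then obtain c where c: "\<psi> = (\<lambda>n. c * \<phi>p n)" using wr_dep[OF s\<psi> pp(1) _ pp(2)] by blast
    have "\<psi> 0 = 0" by (rule decay_int[where \<phi>=\<phi>p and c=c, OF s\<psi> \<psi>i _ pp(3) k1]) (simp add: c)
    then show False using \<psi>0 by simp
  qed
  have Wm: "wr \<phi>m \<psi>' 0 \<noteq> 0"
  proof
    assume "wr \<phi>m \<psi>' 0 = 0"
    then have "wr \<psi>' \<phi>m (-1) = 0" using wr_const[OF m(1) s\<psi>', of "-1"] wr_swap[of \<psi>' \<phi>m "-1"] by simp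
    then obtain c where c: "\<psi>' = (\<lambda>n. c * \<phi>m n)" using wr_dep[OF s\<psi>' m(1) _ m(2)] by blast
    have mb: "\<phi>m (n + - int K) = (1/lc) * \<phi>m n" for n
      using m(3)[of "n - int K"] l0 by (simp add: lc_def field_simps)
    have "\<psi>' 0 = 0" by (rule decay_int[where \<phi>=\<phi>m and c=c, OF s\<psi>' \<psi>'i _ mb k1]) (simp add: c)
    then show False using \<psi>'0 by simp
  qed
  obtain c1 c2 where c12: "\<And>n. \<psi> n = c1 * \<phi>m n + c2 * \<phi>p n" using wr_basis[OF m(1) pp(1) W1 s\<psi>] by blast
  obtain d1 d2 where d12: "\<And>n. \<psi>' n = d1 * \<phi>m n + d2 * \<phi>p n" using wr_basis[OF m(1) pp(1) W1 s\<psi>'] by blast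
  show "lp_invertible p UNIV (H_op v)"
    by (rule kernel_from_sols[OF p m(1) pp(1) W0 L Kp' _ _ Am(1) Ap(1) _ _ V restr_H])
       (use Am(2) Ap' in auto)
  show "lp_invertible p {0..} (H_plus v)"
  proof (rule kernel_from_sols[OF p s\<psi> pp(1) Wp L Kp', where Aa="cmod c1 * Am + cmod c2 * Ap" and Ab=Ap])
    fix n :: int assume n: "n \<in> {0..}"
    have "cmod (\<psi> n) \<le> cmod c1 * cmod (\<phi>m n) + cmod c2 * cmod (\<phi>p n)"
      unfolding c12 using norm_triangle_ineq[of "c1 * \<phi>m n" "c2 * \<phi>p n"] by (simp add: norm_mult)
    also have "\<dots> \<le> cmod c1 * (Am * \<Lambda> powr (real_of_int n / real_of_int (int K))) + cmod c2 * (Ap * \<Lambda> powr (- real_of_int n / real_of_int (int K)))"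
      by (intro add_mono mult_left_mono Am(2) Ap') auto
    also have "\<dots> \<le> cmod c1 * (Am * \<Lambda> powr (real_of_int n / real_of_int (int K))) + cmod c2 * (Ap * \<Lambda> powr (real_of_int n / real_of_int (int K)))"
    proof -
      have "\<Lambda> powr (- real_of_int n / real_of_int (int K)) \<le> \<Lambda> powr (real_of_int n / real_of_int (int K))"
        using L n Kp' by (subst powr_le_cancel_iff) (auto simp: divide_simps)
      then show ?thesis by (intro add_mono mult_left_mono) (use Am(1) Ap(1) in auto)
    qed
    finally show "cmod (\<psi> n) \<le> (cmod c1 * Am + cmod c2 * Ap) * \<Lambda> powr (real_of_int n / real_of_int (int K))"
      by (simp add: algebra_simps)
  next
    fix k m :: int assume "k \<in> {0..}" "m \<in> {0..}" "k - 1 \<notin> {0..}"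
    then have "k = 0" "m \<ge> 0" by auto
    then show "green \<psi> \<phi>p (k - 1) m = 0" using \<psi>0 by (simp add: green_def min_def)
  qed (use Ap' Am(1) Ap(1) V restr_plus p in auto)
  show "lp_invertible p {..0} (H_minus v)"
  proof (rule kernel_from_sols[OF p m(1) s\<psi>' Wm L Kp', where Aa=Am and Ab="cmod d1 * Am + cmod d2 * Ap"])
    fix n :: int assume n: "n \<in> {..0}"
    have "cmod (\<psi>' n) \<le> cmod d1 * cmod (\<phi>m n) + cmod d2 * cmod (\<phi>p n)"
      unfolding d12 using norm_triangle_ineq[of "d1 * \<phi>m n" "d2 * \<phi>p n"] by (simp add: norm_mult)
    also have "\<dots> \<le> cmod d1 * (Am * \<Lambda> powr (real_of_int n / real_of_int (int K))) + cmod d2 * (Ap * \<Lambda> powr (- real_of_int n / real_of_int (int K)))"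
      by (intro add_mono mult_left_mono Am(2) Ap') auto
    also have "\<dots> \<le> cmod d1 * (Am * \<Lambda> powr (- real_of_int n / real_of_int (int K))) + cmod d2 * (Ap * \<Lambda> powr (- real_of_int n / real_of_int (int K)))"
    proof -
      have "\<Lambda> powr (real_of_int n / real_of_int (int K)) \<le> \<Lambda> powr (- real_of_int n / real_of_int (int K))"
        using L n Kp' by (subst powr_le_cancel_iff) (auto simp: divide_simps)
      then show ?thesis by (intro add_mono mult_left_mono) (use Am(1) Ap(1) in auto)
    qed
    finally show "cmod (\<psi>' n) \<le> (cmod d1 * Am + cmod d2 * Ap) * \<Lambda> powr (- real_of_int n / real_of_int (int K))"
      by (simp add: algebra_simps)
  next
    fix k m :: int assume "k \<in> {..0}" "m \<in> {..0}" "k + 1 \<notin> {..0}"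
    then have "k = 0" "m \<le> 0" by auto
    then show "green \<phi>m \<psi>' (k + 1) m = 0" using \<psi>'1 by (simp add: green_def max_def)
  qed (use Am Ap(1) V restr_minus p in auto)
qed

end

theorem proposition3p13:
  fixes p :: ereal and v :: "int \<Rightarrow> int" and K :: nat
  assumes "1 \<le> p"
    and "K \<ge> 1"
    and "\<And>n. v (n + int K) = v n"
  shows "(lp_invertible p UNIV (H_op v) \<longleftrightarrow> lp_invertible p {0..} (H_plus v))
       \<and> (lp_invertible p {0..} (H_plus v) \<longleftrightarrow> lp_invertible p {..0} (H_minus v))
       \<and> (lp_invertible p {..0} (H_minus v) \<longleftrightarrow> \<bar>trace (monodromy v K 0)\<bar> > 2)"
proof -
  interpret P: per v K using assms(2,3) by unfold_locales
  have tr: "trace (monodromy v K 0) = P.tr" by (rule P.tr_eq)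
  show ?thesis
  proof (cases "\<bar>P.tr\<bar> > 2")
    case True
    then show ?thesis using P.inv[OF True assms(1)] tr by simp
  next
    case False
    then have "\<bar>P.tr\<bar> \<le> 2" by simp
    then show ?thesis using P.noninv[OF _ assms(1)] tr False by simp
  qed
qed

end
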